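(* Let $G\subseteq\mathbb{R}^d$ and $\rho\colon G\to(0,\infty)$ Lebesgue integrable, with distribution $\pi$, simple slice sampling operator $U_\rho$ on $L_2(\pi)$, auxiliary measure $\mu$ and auxiliary kernel $Q_\rho$ on $L_2(\mu)$. Then $\mathrm{gap}_\pi(U_\rho)=\mathrm{gap}_\mu(Q_\rho)$.
   Context: $\pi(A)=\int_A\rho/\int_G\rho$. $G(t)=\{x\in G:\rho(x)\ge t\}$, $\ell_\rho(t)=\lambda_d(G(t))$ for $t>0$. $U_t$ is uniform on $G(t)$, $U_\rho(x,A)=\frac{1}{\rho(x)}\int_0^{\rho(x)}U_t(A)\,\mathrm{d}t$, acting by $U_\rho f(x)=\int f(y)U_\rho(x,\mathrm{d}y)$. The probability measure $\mu$ on $(0,\infty)$ is $\mu(B)=\int_B\ell_\rho(t)\,\mathrm{d}t/\int_0^\infty\ell_\rho(r)\,\mathrm{d}r$. The kernel $Q_\rho$ on $(0,\infty)$ (the transition kernel of the auxiliary chain of levels $t$ in simple slice sampling) is $Q_\rho(t,B)=\frac{1}{\lambda_d(G(t))}\int_{G(t)}\frac{\lambda_1(B\cap[0,\rho(x)])}{\rho(x)}\,\mathrm{d}x$, acting by $Q_\rho h(t)=\int h(s)Q_\rho(t,\mathrm{d}s)$. Spectral gaps: $\mathrm{gap}_\pi(U_\rho)=1-\|U_\rho-\mathbb{E}_\pi\|_{L_2(\pi)\to L_2(\pi)}$ and $\mathrm{gap}_\mu(Q_\rho)=1-\|Q_\rho-\mathbb{E}_\mu\|_{L_2(\mu)\to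 L_2(\mu)}$, where $\mathbb{E}_\pi f\equiv\int f\,\mathrm{d}\pi$ and $\mathbb{E}_\mu h\equiv\int h\,\mathrm{d}\mu$ (constant functions). *)

theory Defs
  imports "HOL-Analysis.Analysis"
begin

definition level_set :: "'a::euclidean_space set \<Rightarrow> ('a \<Rightarrow> real) \<Rightarrow> real \<Rightarrow> 'a set" where
  "level_set G \<rho> t = {x \<in> G. \<rho> x \<ge> t}"

definition level_vol :: "'a::euclidean_space set \<Rightarrow> ('a \<Rightarrow> real) \<Rightarrow> real \<Rightarrow> real" where
  "level_vol G \<rho> t = measure lebesgue (level_set G \<rho> t)"

definition target :: "'a::euclidean_space set \<Rightarrow> ('a \<Rightarrow> real) \<Rightarrow> 'a measure" where
  "target G \<rho> = density lebesgue
     (\<lambda>x. ennreal (indicator G x * \<rho> x / (\<integral>y. indicator G y * \<rho> y \<partial>lebesgue)))"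

definition aux_measure :: "'a::euclidean_space set \<Rightarrow> ('a \<Rightarrow> real) \<Rightarrow> real measure" where
  "aux_measure G \<rho> = density lborel
     (\<lambda>t. ennreal (indicator {0<..} t * level_vol G \<rho> t
                   / (\<integral>r. indicator {0<..} r * level_vol G \<rho> r \<partial>lborel)))"

definition unif_level :: "'a::euclidean_space set \<Rightarrow> ('a \<Rightarrow> real) \<Rightarrow> real \<Rightarrow> 'a measure" where
  "unif_level G \<rho> t = uniform_measure lebesgue (level_set G \<rho> t)"

definition slice_kernel :: "'a::euclidean_space set \<Rightarrow> ('a \<Rightarrow> real) \<Rightarrow> 'a \<Rightarrow> 'a measure" where
  "slice_kernel G \<rho> x = measure_of UNIV (sets lebesgue)
     (\<lambda>A. ennreal (1 / \<rho> x) *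
          (\<integral>\<^sup>+ t. indicator {0..\<rho> x} t * emeasure (unif_level G \<rho> t) A \<partial>lborel))"

definition aux_kernel :: "'a::euclidean_space set \<Rightarrow> ('a \<Rightarrow> real) \<Rightarrow> real \<Rightarrow> real measure" where
  "aux_kernel G \<rho> t = measure_of UNIV (sets lborel)
     (\<lambda>B. ennreal (1 / level_vol G \<rho> t) *
          (\<integral>\<^sup>+ x. indicator (level_set G \<rho> t) x
                   * emeasure lborel (B \<inter> {0..\<rho> x}) / ennreal (\<rho> x) \<partial>lebesgue))"

definition kernel_op :: "('b \<Rightarrow> 'c measure) \<Rightarrow> ('c \<Rightarrow> real) \<Rightarrow> 'b \<Rightarrow> real" where
  "kernel_op K f x = (\<integral>y. f y \<partial>K x)"

definition L2 :: "'b measure \<Rightarrow> ('b \<Rightarrow> real) set" where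
  "L2 M = {f. f \<in> borel_measurable M \<and> integrable M (\<lambda>x. (f x)\<^sup>2)}"

definition L2_normsq :: "'b measure \<Rightarrow> ('b \<Rightarrow> real) \<Rightarrow> ennreal" where
  "L2_normsq M f = (\<integral>\<^sup>+ x. ennreal ((f x)\<^sup>2) \<partial>M)"

definition opnorm_minus_E :: "'b measure \<Rightarrow> (('b \<Rightarrow> real) \<Rightarrow> ('b \<Rightarrow> real)) \<Rightarrow> ennreal" where
  "opnorm_minus_E M T =
     (let S = (SUP f\<in>{f \<in> L2 M. L2_normsq M f \<le> 1}.
                 L2_normsq M (\<lambda>x. T f x - (\<integral>y. f y \<partial>M)))
      in if S = top then top else ennreal (sqrt (enn2real S)))"

definition spectral_gap :: "'b measure \<Rightarrow> (('b \<Rightarrow> real) \<Rightarrow> ('b \<Rightarrow> real)) \<Rightarrow> ereal" where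
  "spectral_gap M T = 1 - enn2ereal (opnorm_minus_E M T)"

end

theory Submission
  imports Defs
begin

lemma CS2:
  fixes f g :: "'a \<Rightarrow> real"
  assumes [measurable]: "f \<in> borel_measurable M" "g \<in> borel_measurable M"
    and i1: "integrable M (\<lambda>x. (f x)\<^sup>2)" and i2: "integrable M (\<lambda>x. (g x)\<^sup>2)"
  shows "integrable M (\<lambda>x. f x * g x)"
    and "(\<integral>x. f x * g x \<partial>M)\<^sup>2 \<le> (\<integral>x. (f x)\<^sup>2 \<partial>M) * (\<integral>x. (g x)\<^sup>2 \<partial>M)"
proof -
  have cs: "(\<integral>\<^sup>+x. ennreal \<bar>f x\<bar> * ennreal \<bar>g x\<bar> \<partial>M)\<^sup>2
      \<le> (\<integral>\<^sup>+x. (ennreal \<bar>f x\<bar>)\<^sup>2 \<partial>M) * (\<integral>\<^sup>+x. (ennreal \<bar>g x\<bar>)\<^sup>2 \<partial>M)"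
    by (rule Cauchy_Schwarz_nn_integral) measurable
  have e1: "(\<integral>\<^sup>+x. (ennreal \<bar>f x\<bar>)\<^sup>2 \<partial>M) = ennreal (\<integral>x. (f x)\<^sup>2 \<partial>M)"
    by (subst nn_integral_eq_integral[symmetric]) (auto simp: i1 ennreal_power intro!: nn_integral_cong)
  have e2: "(\<integral>\<^sup>+x. (ennreal \<bar>g x\<bar>)\<^sup>2 \<partial>M) = ennreal (\<integral>x. (g x)\<^sup>2 \<partial>M)"
    by (subst nn_integral_eq_integral[symmetric]) (auto simp: i2 ennreal_power intro!: nn_integral_cong)
  have e3: "(\<integral>\<^sup>+x. ennreal \<bar>f x\<bar> * ennreal \<bar>g x\<bar> \<partial>M) = (\<integral>\<^sup>+x. ennreal (norm (f x * g x)) \<partial>M)"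
    by (auto simp: ennreal_mult abs_mult intro!: nn_integral_cong)
  have fin: "(\<integral>\<^sup>+x. ennreal (norm (f x * g x)) \<partial>M) < \<infinity>"
  proof -
    have "(\<integral>\<^sup>+x. ennreal (norm (f x * g x)) \<partial>M)\<^sup>2 < \<infinity>"
      using cs e1 e2 e3 by (simp flip: ennreal_mult) (meson ennreal_less_top le_less_trans)
    then show ?thesis by (simp add: power_less_top_ennreal)
  qed
  show int: "integrable M (\<lambda>x. f x * g x)"
    using fin by (subst integrable_iff_bounded) simp
  have int_abs: "integrable M (\<lambda>x. \<bar>f x * g x\<bar>)" using int by simp
  have "(\<integral>\<^sup>+x. ennreal (norm (f x * g x)) \<partial>M) = ennreal (\<integral>x. \<bar>f x * g x\<bar> \<partial>M)"
    by (subst nn_integral_eq_integral[symmetric]) (auto simp: int_abs)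
  with cs e1 e2 e3 have "ennreal ((\<integral>x. \<bar>f x * g x\<bar> \<partial>M)\<^sup>2) \<le> ennreal ((\<integral>x. (f x)\<^sup>2 \<partial>M) * (\<integral>x. (g x)\<^sup>2 \<partial>M))"
    by (simp add: ennreal_power ennreal_mult integral_nonneg_AE)
  then have "(\<integral>x. \<bar>f x * g x\<bar> \<partial>M)\<^sup>2 \<le> (\<integral>x. (f x)\<^sup>2 \<partial>M) * (\<integral>x. (g x)\<^sup>2 \<partial>M)"
    by (subst (asm) ennreal_le_iff) (auto intro!: mult_nonneg_nonneg integral_nonneg_AE)
  moreover have "\<bar>\<integral>x. f x * g x \<partial>M\<bar> \<le> (\<integral>x. \<bar>f x * g x\<bar> \<partial>M)"
    using integral_abs_bound[of M "\<lambda>x. f x * g x"] by simp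
  then have "(\<integral>x. f x * g x \<partial>M)\<^sup>2 \<le> (\<integral>x. \<bar>f x * g x\<bar> \<partial>M)\<^sup>2"
    by (metis abs_ge_zero power2_abs power_mono)
  ultimately show "(\<integral>x. f x * g x \<partial>M)\<^sup>2 \<le> (\<integral>x. (f x)\<^sup>2 \<partial>M) * (\<integral>x. (g x)\<^sup>2 \<partial>M)" by linarith
qed



locale twostage =
  M1: sigma_finite_measure M1 + M2: sigma_finite_measure M2
  for M1 :: "'a measure" and M2 :: "'b measure" +
  fixes k :: "'a \<Rightarrow> 'b \<Rightarrow> real" and p1 :: "'a \<Rightarrow> real" and p2 :: "'b \<Rightarrow> real"
  assumes k_meas[measurable]: "(\<lambda>(x,t). k x t) \<in> borel_measurable (M1 \<Otimes>\<^sub>M M2)"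
  and k_nn: "\<And>x t. 0 \<le> k x t"
  and p1_nn: "\<And>x. 0 \<le> p1 x" and p2_nn: "\<And>t. 0 \<le> p2 t"
  and p1_eq: "\<And>x. x \<in> space M1 \<Longrightarrow> ennreal (p1 x) = (\<integral>\<^sup>+t. k x t \<partial>M2)"
  and p2_eq: "\<And>t. t \<in> space M2 \<Longrightarrow> ennreal (p2 t) = (\<integral>\<^sup>+x. k x t \<partial>M1)"
  and total: "(\<integral>\<^sup>+x. p1 x \<partial>M1) = 1"
begin

sublocale P: pair_sigma_finite M1 M2 ..

lemma p1_meas[measurable]: "p1 \<in> borel_measurable M1"
proof -
  have "(\<lambda>x. enn2real (\<integral>\<^sup>+t. k x t \<partial>M2)) \<in> borel_measurable M1" by measurable
  moreover have "\<And>x. x \<in> space M1 \<Longrightarrow> enn2real (\<integral>\<^sup>+t. k x t \<partial>M2) = p1 x"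
    using p1_eq p1_nn by (metis enn2real_ennreal)
  ultimately show ?thesis by (subst measurable_cong[where g="\<lambda>x. enn2real (\<integral>\<^sup>+t. k x t \<partial>M2)"]) auto
qed

lemma p2_meas[measurable]: "p2 \<in> borel_measurable M2"
proof -
  have "(\<lambda>t. enn2real (\<integral>\<^sup>+x. k x t \<partial>M1)) \<in> borel_measurable M2" by measurable
  moreover have "\<And>t. t \<in> space M2 \<Longrightarrow> enn2real (\<integral>\<^sup>+x. k x t \<partial>M1) = p2 t"
    using p2_eq p2_nn by (metis enn2real_ennreal)
  ultimately show ?thesis by (subst measurable_cong[where g="\<lambda>t. enn2real (\<integral>\<^sup>+x. k x t \<partial>M1)"]) auto
qed

lemma total2: "(\<integral>\<^sup>+t. p2 t \<partial>M2) = 1"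
proof -
  have "(\<integral>\<^sup>+t. p2 t \<partial>M2) = (\<integral>\<^sup>+t. \<integral>\<^sup>+x. k x t \<partial>M1 \<partial>M2)"
    by (rule nn_integral_cong) (simp add: p2_eq)
  also have "\<dots> = (\<integral>\<^sup>+x. \<integral>\<^sup>+t. k x t \<partial>M2 \<partial>M1)"
    by (rule P.Fubini') measurable
  also have "\<dots> = (\<integral>\<^sup>+x. p1 x \<partial>M1)"
    by (rule nn_integral_cong) (simp add: p1_eq)
  finally show ?thesis using total by simp
qed

lemma swap: "twostage M2 M1 (\<lambda>t x. k x t) p2 p1"
proof unfold_locales
  show "(\<lambda>(t, x). k x t) \<in> borel_measurable (M2 \<Otimes>\<^sub>M M1)" by measurable
qed (simp_all add: k_nn p1_nn p2_nn p1_eq p2_eq total2)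



definition "PI = density M1 (\<lambda>x. ennreal (p1 x))"
definition "MU = density M2 (\<lambda>t. ennreal (p2 t))"
definition "Bop f t = (\<integral>y. f y * k y t \<partial>M1) / p2 t"
definition "Aop h x = (\<integral>t. h t * k x t \<partial>M2) / p1 x"
definition "K1 x = density M1 (\<lambda>y. \<integral>\<^sup>+t. ennreal (k x t * k y t / (p1 x * p2 t)) \<partial>M2)"

lemma PI_space: "emeasure PI (space PI) = 1"
  using total by (simp add: PI_def emeasure_density)

lemma fin_PI: "finite_measure PI"
  by (rule finite_measureI) (simp add: PI_space)

lemma measure_PI_space: "measure PI (space PI) = 1"
  by (simp add: measure_def PI_space)

lemma sets_PI[measurable_cong]: "sets PI = sets M1" and space_PI: "space PI = space M1"
  by (simp_all add: PI_def)

lemma meas_PI: "f \<in> borel_measurable PI \<longleftrightarrow> f \<in> borel_measurable M1"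
  by (simp add: PI_def)

lemma L2_PI: "f \<in> L2 PI \<Longrightarrow> integrable PI f"
  unfolding L2_def
  using fin_PI finite_measure.square_integrable_imp_integrable by blast

lemma L2_PI_meas: "f \<in> L2 PI \<Longrightarrow> f \<in> borel_measurable M1"
  unfolding L2_def by (simp add: meas_PI)

lemma integrable_PI_iff: "f \<in> borel_measurable M1 \<Longrightarrow> integrable PI f \<longleftrightarrow> integrable M1 (\<lambda>x. p1 x * f x)"
  unfolding PI_def by (subst integrable_density) (auto simp: p1_nn)

lemma integral_PI: "f \<in> borel_measurable M1 \<Longrightarrow> integral\<^sup>L PI f = (\<integral>x. p1 x * f x \<partial>M1)"
  unfolding PI_def by (subst integral_density) (auto simp: p1_nn)

lemma nn_integral_PI: "f \<in> borel_measurable M1 \<Longrightarrow> (\<integral>\<^sup>+x. f x \<partial>PI) = (\<integral>\<^sup>+x. ennreal (p1 x) * f x \<partial>M1)"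
  unfolding PI_def by (subst nn_integral_density) auto

lemma L2_PI_nn:
  assumes "f \<in> L2 PI"
  shows "(\<integral>\<^sup>+x. ennreal (p1 x) * ennreal ((f x)\<^sup>2) \<partial>M1) < \<infinity>"
proof -
  have m: "f \<in> borel_measurable M1" using L2_PI_meas[OF assms] .
  have "integrable PI (\<lambda>x. (f x)\<^sup>2)" using assms by (simp add: L2_def)
  then have "(\<integral>\<^sup>+x. ennreal ((f x)\<^sup>2) \<partial>PI) < \<infinity>"
    by (simp add: integrable_iff_bounded)
  then show ?thesis using m by (simp add: nn_integral_PI)
qed

lemma L2_PI_nn_abs:
  assumes "f \<in> L2 PI"
  shows "(\<integral>\<^sup>+x. ennreal (p1 x) * ennreal \<bar>f x\<bar> \<partial>M1) < \<infinity>"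
proof -
  have m: "f \<in> borel_measurable M1" using L2_PI_meas[OF assms] .
  have "integrable PI f" using L2_PI[OF assms] .
  then have "(\<integral>\<^sup>+x. ennreal (norm (f x)) \<partial>PI) < \<infinity>"
    by (simp add: integrable_iff_bounded)
  then show ?thesis using m by (simp add: nn_integral_PI)
qed

lemma nnF:
  assumes [measurable]: "g \<in> borel_measurable M1"
  shows "(\<integral>\<^sup>+t. \<integral>\<^sup>+y. g y * ennreal (k y t) \<partial>M1 \<partial>M2) = (\<integral>\<^sup>+y. ennreal (p1 y) * g y \<partial>M1)"
proof -
  have "(\<integral>\<^sup>+t. \<integral>\<^sup>+y. g y * ennreal (k y t) \<partial>M1 \<partial>M2) = (\<integral>\<^sup>+y. \<integral>\<^sup>+t. g y * ennreal (k y t) \<partial>M2 \<partial>M1)"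
    by (rule P.Fubini') measurable
  also have "\<dots> = (\<integral>\<^sup>+y. g y * (\<integral>\<^sup>+t. ennreal (k y t) \<partial>M2) \<partial>M1)"
    by (rule nn_integral_cong) (simp add: nn_integral_cmult)
  also have "\<dots> = (\<integral>\<^sup>+y. ennreal (p1 y) * g y \<partial>M1)"
    by (rule nn_integral_cong) (simp add: p1_eq mult.commute)
  finally show ?thesis .
qed

lemma AE_int:
  assumes "f \<in> L2 PI"
  shows "AE t in M2. integrable M1 (\<lambda>y. f y * k y t) \<and> integrable M1 (\<lambda>y. (f y)\<^sup>2 * k y t)"
proof -
  have m[measurable]: "f \<in> borel_measurable M1" using L2_PI_meas[OF assms] .
  have "(\<integral>\<^sup>+t. \<integral>\<^sup>+y. ennreal \<bar>f y\<bar> * ennreal (k y t) \<partial>M1 \<partial>M2) \<noteq> \<infinity>"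
    using nnF[of "\<lambda>y. ennreal \<bar>f y\<bar>"] L2_PI_nn_abs[OF assms] by simp
  then have 1: "AE t in M2. (\<integral>\<^sup>+y. ennreal \<bar>f y\<bar> * ennreal (k y t) \<partial>M1) \<noteq> \<infinity>"
    by (intro nn_integral_PInf_AE) measurable
  have "(\<integral>\<^sup>+t. \<integral>\<^sup>+y. ennreal ((f y)\<^sup>2) * ennreal (k y t) \<partial>M1 \<partial>M2) \<noteq> \<infinity>"
    using nnF[of "\<lambda>y. ennreal ((f y)\<^sup>2)"] L2_PI_nn[OF assms] by simp
  then have 2: "AE t in M2. (\<integral>\<^sup>+y. ennreal ((f y)\<^sup>2) * ennreal (k y t) \<partial>M1) \<noteq> \<infinity>"
    by (intro nn_integral_PInf_AE) measurable
  show ?thesis using 1 2 AE_space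
  proof eventually_elim
    case (elim t)
    note [measurable] = elim(3)
    have "integrable M1 (\<lambda>y. f y * k y t)"
      using elim(1) by (subst integrable_iff_bounded) (auto simp: abs_mult k_nn ennreal_mult top.not_eq_extremum intro: borel_measurable_times)
    moreover have "integrable M1 (\<lambda>y. (f y)\<^sup>2 * k y t)"
      using elim(2) by (subst integrable_iff_bounded) (auto simp: abs_mult k_nn ennreal_mult top.not_eq_extremum intro: borel_measurable_times)
    ultimately show ?case by simp
  qed
qed

end

context twostage begin

lemma PI_S: "twostage.PI M2 p2 = MU"
  by (simp add: twostage.PI_def[OF swap] MU_def)
lemma MU_S: "twostage.MU M1 p1 = PI"
  by (simp add: twostage.MU_def[OF swap] PI_def)
lemma Bop_S: "twostage.Bop M2 (\<lambda>t x. k x t) p1 = Aop"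
  by (simp add: twostage.Bop_def[OF swap] Aop_def fun_eq_iff)
lemma Aop_S: "twostage.Aop M1 (\<lambda>t x. k x t) p2 = Bop"
  by (simp add: twostage.Aop_def[OF swap] Bop_def fun_eq_iff)

lemma p1_zero:
  assumes x: "x \<in> space M1" and z: "p1 x = 0"
  shows "(\<integral>t. g t * k x t \<partial>M2) = 0"
proof -
  note [measurable] = x
  have "(\<integral>\<^sup>+t. k x t \<partial>M2) = 0" using p1_eq[OF x] z by simp
  then have "AE t in M2. ennreal (k x t) = 0"
    by (subst (asm) nn_integral_0_iff_AE) measurable
  then have "AE t in M2. g t * k x t = 0" by eventually_elim (simp add: k_nn)
  then show ?thesis by (rule integral_eq_zero_AE)
qed

lemma p2_zero:
  assumes t: "t \<in> space M2" and z: "p2 t = 0"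
  shows "(\<integral>y. f y * k y t \<partial>M1) = 0"
proof -
  interpret S: twostage M2 M1 "\<lambda>t x. k x t" p2 p1 by (rule swap)
  show ?thesis using S.p1_zero[OF t z] .
qed

lemma int_k1: "x \<in> space M1 \<Longrightarrow> (\<integral>t. k x t \<partial>M2) = p1 x"
  by (subst integral_eq_nn_integral) (auto simp: k_nn p1_eq[symmetric] p1_nn)

lemma int_k2: "t \<in> space M2 \<Longrightarrow> (\<integral>x. k x t \<partial>M1) = p2 t"
  by (subst integral_eq_nn_integral) (auto simp: k_nn p2_eq[symmetric] p2_nn)

lemma Bop_meas[measurable]:
  assumes [measurable]: "f \<in> borel_measurable M1"
  shows "Bop f \<in> borel_measurable M2"
  unfolding Bop_def by measurable

lemma Aop_meas[measurable]:
  assumes [measurable]: "h \<in> borel_measurable M2"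
  shows "Aop h \<in> borel_measurable M1"
  unfolding Aop_def by measurable

lemma jensen:
  assumes t: "t \<in> space M2" and f[measurable]: "f \<in> borel_measurable M1"
    and i: "integrable M1 (\<lambda>y. (f y)\<^sup>2 * k y t)"
  shows "(Bop f t)\<^sup>2 * p2 t \<le> (\<integral>y. (f y)\<^sup>2 * k y t \<partial>M1)"
proof (cases "p2 t = 0")
  case True
  then show ?thesis by (auto simp: Bop_def k_nn intro!: integral_nonneg_AE)
next
  case False
  note [measurable] = t
  have ik: "integrable M1 (\<lambda>y. k y t)"
    using p2_eq[OF t] by (intro integrableI_nn_integral_finite[where x="p2 t"]) (auto simp: k_nn)
  have cs: "(\<integral>y. (f y * sqrt (k y t)) * sqrt (k y t) \<partial>M1)\<^sup>2
     \<le> (\<integral>y. (f y * sqrt (k y t))\<^sup>2 \<partial>M1) * (\<integral>y. (sqrt (k y t))\<^sup>2 \<partial>M1)"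
    by (rule CS2(2)) (auto simp: power_mult_distrib k_nn i ik)
  have e1: "\<And>y. (f y * sqrt (k y t)) * sqrt (k y t) = f y * k y t"
    by (simp add: k_nn mult.assoc)
  have e2: "\<And>y. (f y * sqrt (k y t))\<^sup>2 = (f y)\<^sup>2 * k y t"
    by (simp add: k_nn power_mult_distrib)
  have e3: "\<And>y. (sqrt (k y t))\<^sup>2 = k y t" by (simp add: k_nn)
  have cs': "(\<integral>y. f y * k y t \<partial>M1)\<^sup>2 \<le> (\<integral>y. (f y)\<^sup>2 * k y t \<partial>M1) * p2 t"
    using cs unfolding e1 e2 e3 int_k2[OF t] .
  have p: "p2 t > 0" using False p2_nn[of t] by simp
  have "(Bop f t)\<^sup>2 * p2 t = (\<integral>y. f y * k y t \<partial>M1)\<^sup>2 / p2 t"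
    using p by (simp add: Bop_def power2_eq_square)
  also have "\<dots> \<le> (\<integral>y. (f y)\<^sup>2 * k y t \<partial>M1)"
    using cs' p by (simp add: divide_le_eq)
  finally show ?thesis .
qed

lemma L2_nsq: "f \<in> L2 M \<Longrightarrow> L2_normsq M f = ennreal (\<integral>x. (f x)\<^sup>2 \<partial>M)"
  unfolding L2_normsq_def L2_def by (subst nn_integral_eq_integral) auto

lemma nn_integral_MU: "f \<in> borel_measurable M2 \<Longrightarrow> (\<integral>\<^sup>+t. f t \<partial>MU) = (\<integral>\<^sup>+t. ennreal (p2 t) * f t \<partial>M2)"
  unfolding MU_def by (subst nn_integral_density) auto

lemma Bop_L2:
  assumes f: "f \<in> L2 PI"
  shows "Bop f \<in> L2 MU" and "L2_normsq MU (Bop f) \<le> L2_normsq PI f"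
proof -
  have fm[measurable]: "f \<in> borel_measurable M1" using L2_PI_meas[OF f] .
  have "L2_normsq MU (Bop f) = (\<integral>\<^sup>+t. ennreal (p2 t) * ennreal ((Bop f t)\<^sup>2) \<partial>M2)"
    unfolding L2_normsq_def by (rule nn_integral_MU) measurable
  also have "\<dots> \<le> (\<integral>\<^sup>+t. \<integral>\<^sup>+y. ennreal ((f y)\<^sup>2) * ennreal (k y t) \<partial>M1 \<partial>M2)"
  proof (rule nn_integral_mono_AE)
    show "AE t in M2. ennreal (p2 t) * ennreal ((Bop f t)\<^sup>2) \<le> (\<integral>\<^sup>+y. ennreal ((f y)\<^sup>2) * ennreal (k y t) \<partial>M1)"
      using AE_int[OF f] AE_space
    proof eventually_elim
      case (elim t)
      note [measurable] = elim(2)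
      have "ennreal (p2 t) * ennreal ((Bop f t)\<^sup>2) = ennreal ((Bop f t)\<^sup>2 * p2 t)"
        by (simp add: ennreal_mult p2_nn mult.commute)
      also have "\<dots> \<le> ennreal (\<integral>y. (f y)\<^sup>2 * k y t \<partial>M1)"
        using jensen[OF elim(2) fm] elim(1) by (simp add: ennreal_leI)
      also have "\<dots> = (\<integral>\<^sup>+y. ennreal ((f y)\<^sup>2 * k y t) \<partial>M1)"
        using elim(1) by (subst nn_integral_eq_integral) (auto simp: k_nn)
      also have "\<dots> = (\<integral>\<^sup>+y. ennreal ((f y)\<^sup>2) * ennreal (k y t) \<partial>M1)"
        by (simp add: ennreal_mult k_nn)
      finally show ?case .
    qed
  qed
  also have "\<dots> = (\<integral>\<^sup>+y. ennreal (p1 y) * ennreal ((f y)\<^sup>2) \<partial>M1)"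
    by (rule nnF) measurable
  also have "\<dots> = L2_normsq PI f"
    unfolding L2_normsq_def by (rule nn_integral_PI[symmetric]) measurable
  finally show le: "L2_normsq MU (Bop f) \<le> L2_normsq PI f" .
  have "L2_normsq PI f < \<infinity>"
    using L2_PI_nn[OF f] by (simp add: L2_normsq_def nn_integral_PI)
  with le have fin: "L2_normsq MU (Bop f) < \<infinity>" by (rule le_less_trans)
  have bm: "Bop f \<in> borel_measurable MU" by (simp add: MU_def)
  have "integrable MU (\<lambda>t. (Bop f t)\<^sup>2)"
    using fin bm by (subst integrable_iff_bounded) (auto simp: L2_normsq_def)
  then show "Bop f \<in> L2 MU" using bm by (simp add: L2_def)
qed

lemma L2_MU_meas: "h \<in> L2 MU \<Longrightarrow> h \<in> borel_measurable M2"
  unfolding L2_def MU_def by simp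

lemma L2_MU_nn:
  assumes "h \<in> L2 MU"
  shows "(\<integral>\<^sup>+t. ennreal (p2 t) * ennreal ((h t)\<^sup>2) \<partial>M2) < \<infinity>"
proof -
  interpret S: twostage M2 M1 "\<lambda>t x. k x t" p2 p1 by (rule swap)
  show ?thesis using S.L2_PI_nn assms unfolding PI_S by blast
qed

lemma ip_PI:
  assumes f: "f \<in> L2 PI" and h: "h \<in> L2 MU"
  shows "(\<integral>x. Aop h x * f x \<partial>PI) = (\<integral>x. \<integral>t. f x * h t * k x t \<partial>M2 \<partial>M1)"
proof -
  have [measurable]: "f \<in> borel_measurable M1" using L2_PI_meas[OF f] .
  have [measurable]: "h \<in> borel_measurable M2" using L2_MU_meas[OF h] .
  have "(\<integral>x. Aop h x * f x \<partial>PI) = (\<integral>x. p1 x * (Aop h x * f x) \<partial>M1)"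
    by (rule integral_PI) measurable
  also have "\<dots> = (\<integral>x. \<integral>t. f x * h t * k x t \<partial>M2 \<partial>M1)"
  proof (rule Bochner_Integration.integral_cong[OF refl])
    fix x assume x: "x \<in> space M1"
    show "p1 x * (Aop h x * f x) = (\<integral>t. f x * h t * k x t \<partial>M2)"
    proof (cases "p1 x = 0")
      case True
      then show ?thesis using p1_zero[OF x True, of "\<lambda>t. f x * h t"] by simp
    next
      case False
      have "(\<integral>t. f x * h t * k x t \<partial>M2) = f x * (\<integral>t. h t * k x t \<partial>M2)"
        by (simp add: mult.assoc)
      then show ?thesis using False by (simp add: Aop_def)
    qed
  qed
  finally show ?thesis .
qed

lemma ab_le: "\<bar>a * b\<bar> \<le> a\<^sup>2 + (b::real)\<^sup>2"
proof -
  have "0 \<le> (\<bar>a\<bar> - \<bar>b\<bar>)\<^sup>2" by simp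
  then have "2 * (\<bar>a\<bar> * \<bar>b\<bar>) \<le> a\<^sup>2 + b\<^sup>2" by (simp add: power2_eq_square algebra_simps)
  moreover have "0 \<le> \<bar>a\<bar> * \<bar>b\<bar>" by simp
  moreover have "\<bar>a * b\<bar> = \<bar>a\<bar> * \<bar>b\<bar>" by (simp add: abs_mult)
  ultimately show ?thesis by linarith
qed

lemma prod_int:
  assumes f: "f \<in> L2 PI" and h: "h \<in> L2 MU"
  shows "integrable (M1 \<Otimes>\<^sub>M M2) (\<lambda>(x,t). f x * h t * k x t)"
proof -
  have [measurable]: "f \<in> borel_measurable M1" using L2_PI_meas[OF f] .
  have [measurable]: "h \<in> borel_measurable M2" using L2_MU_meas[OF h] .
  have le: "ennreal (norm ((\<lambda>(x,t). f x * h t * k x t) z)) \<le>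
      ennreal ((f (fst z))\<^sup>2) * ennreal (k (fst z) (snd z)) + ennreal ((h (snd z))\<^sup>2) * ennreal (k (fst z) (snd z))" for z
  proof -
    obtain x t where z: "z = (x,t)" by (cases z)
    have "\<bar>f x * h t * k x t\<bar> = \<bar>f x * h t\<bar> * k x t" by (simp add: abs_mult k_nn)
    also have "\<dots> \<le> ((f x)\<^sup>2 + (h t)\<^sup>2) * k x t" by (rule mult_right_mono[OF ab_le k_nn])
    finally have "ennreal \<bar>f x * h t * k x t\<bar> \<le> ennreal ((f x)\<^sup>2 * k x t + (h t)\<^sup>2 * k x t)"
      by (intro ennreal_leI) (simp add: algebra_simps)
    then show ?thesis using z by (simp add: ennreal_plus[symmetric] ennreal_mult[symmetric] k_nn del: ennreal_plus)
  qed
  have "(\<integral>\<^sup>+z. ennreal (norm ((\<lambda>(x,t). f x * h t * k x t) z)) \<partial>(M1 \<Otimes>\<^sub>M M2))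
     \<le> (\<integral>\<^sup>+z. ennreal ((f (fst z))\<^sup>2) * ennreal (k (fst z) (snd z)) + ennreal ((h (snd z))\<^sup>2) * ennreal (k (fst z) (snd z)) \<partial>(M1 \<Otimes>\<^sub>M M2))"
    by (rule nn_integral_mono) (rule le)
  also have "\<dots> = (\<integral>\<^sup>+z. ennreal ((f (fst z))\<^sup>2) * ennreal (k (fst z) (snd z)) \<partial>(M1 \<Otimes>\<^sub>M M2))
       + (\<integral>\<^sup>+z. ennreal ((h (snd z))\<^sup>2) * ennreal (k (fst z) (snd z)) \<partial>(M1 \<Otimes>\<^sub>M M2))"
    by (rule nn_integral_add) measurable
  also have "(\<integral>\<^sup>+z. ennreal ((f (fst z))\<^sup>2) * ennreal (k (fst z) (snd z)) \<partial>(M1 \<Otimes>\<^sub>M M2))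
      = (\<integral>\<^sup>+x. \<integral>\<^sup>+t. ennreal ((f x)\<^sup>2) * ennreal (k x t) \<partial>M2 \<partial>M1)"
  proof -
    have m1: "(\<lambda>z. ennreal ((f (fst z))\<^sup>2) * ennreal (k (fst z) (snd z))) \<in> borel_measurable (M1 \<Otimes>\<^sub>M M2)" by measurable
    show ?thesis using M2.nn_integral_fst[OF m1] by simp
  qed
  also have "\<dots> = (\<integral>\<^sup>+x. ennreal (p1 x) * ennreal ((f x)\<^sup>2) \<partial>M1)"
    by (rule nn_integral_cong) (simp add: nn_integral_cmult p1_eq; simp add: mult.commute)
  also have "(\<integral>\<^sup>+z. ennreal ((h (snd z))\<^sup>2) * ennreal (k (fst z) (snd z)) \<partial>(M1 \<Otimes>\<^sub>M M2))
      = (\<integral>\<^sup>+t. \<integral>\<^sup>+x. ennreal ((h t)\<^sup>2) * ennreal (k x t) \<partial>M1 \<partial>M2)"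
  proof -
    have m1: "(\<lambda>z. ennreal ((h (snd z))\<^sup>2) * ennreal (k (fst z) (snd z))) \<in> borel_measurable (M1 \<Otimes>\<^sub>M M2)" by measurable
    show ?thesis using P.nn_integral_snd[OF m1] by simp
  qed
  also have "\<dots> = (\<integral>\<^sup>+t. ennreal (p2 t) * ennreal ((h t)\<^sup>2) \<partial>M2)"
    by (rule nn_integral_cong) (simp add: nn_integral_cmult p2_eq; simp add: mult.commute)
  finally have "(\<integral>\<^sup>+z. ennreal (norm ((\<lambda>(x,t). f x * h t * k x t) z)) \<partial>(M1 \<Otimes>\<^sub>M M2)) < \<infinity>"
    using L2_PI_nn[OF f] L2_MU_nn[OF h] by (simp add: ennreal_add_less_top le_less_trans)
  then show ?thesis by (subst integrable_iff_bounded) simp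
qed

lemma adjoint:
  assumes f: "f \<in> L2 PI" and h: "h \<in> L2 MU"
  shows "(\<integral>x. Aop h x * f x \<partial>PI) = (\<integral>t. h t * Bop f t \<partial>MU)"
proof -
  interpret S: twostage M2 M1 "\<lambda>t x. k x t" p2 p1 by (rule swap)
  have 1: "(\<integral>t. Bop f t * h t \<partial>MU) = (\<integral>t. \<integral>x. h t * f x * k x t \<partial>M1 \<partial>M2)"
    using S.ip_PI[of h f] h f unfolding PI_S MU_S Bop_S Aop_S by simp
  have 2: "(\<integral>t. \<integral>x. f x * h t * k x t \<partial>M1 \<partial>M2) = (\<integral>x. \<integral>t. f x * h t * k x t \<partial>M2 \<partial>M1)"
    using P.Fubini_integral[OF prod_int[OF f h]] by simp
  show ?thesis using ip_PI[OF f h] 1 2 by (simp add: mult_ac)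
qed

lemma AE_PI_iff: "(AE x in PI. P x) \<longleftrightarrow> (AE x in M1. 0 < p1 x \<longrightarrow> P x)"
  unfolding PI_def by (subst AE_density) auto

lemma MU_fin: "finite_measure MU"
proof -
  interpret S: twostage M2 M1 "\<lambda>t x. k x t" p2 p1 by (rule swap)
  show ?thesis using S.fin_PI unfolding PI_S .
qed

lemma Aop_const: "x \<in> space M1 \<Longrightarrow> p1 x \<noteq> 0 \<Longrightarrow> Aop (\<lambda>_. c) x = c"
  by (simp add: Aop_def int_k1)

lemma one_L2_MU: "(\<lambda>_. c) \<in> L2 MU"
proof -
  interpret F: finite_measure MU by (rule MU_fin)
  show ?thesis by (simp add: L2_def)
qed

lemma E_Bop:
  assumes f: "f \<in> L2 PI"
  shows "(\<integral>t. Bop f t \<partial>MU) = (\<integral>x. f x \<partial>PI)"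
proof -
  have [measurable]: "f \<in> borel_measurable M1" using L2_PI_meas[OF f] .
  have "(\<integral>t. Bop f t \<partial>MU) = (\<integral>t. 1 * Bop f t \<partial>MU)" by simp
  also have "\<dots> = (\<integral>x. Aop (\<lambda>_. 1) x * f x \<partial>PI)"
    using adjoint[OF f one_L2_MU[of 1]] by simp
  also have "\<dots> = (\<integral>x. f x \<partial>PI)"
  proof (rule integral_cong_AE)
    show "AE x in PI. Aop (\<lambda>_. 1) x * f x = f x"
      unfolding AE_PI_iff using AE_space by eventually_elim (simp add: Aop_const)
  qed (simp_all add: meas_PI)
  finally show ?thesis .
qed

lemma Aop_minus:
  assumes h: "h \<in> L2 MU"
  shows "AE x in PI. Aop (\<lambda>t. h t - c) x = Aop h x - c"
proof -
  interpret S: twostage M2 M1 "\<lambda>t x. k x t" p2 p1 by (rule swap)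
  have [measurable]: "h \<in> borel_measurable M2" using L2_MU_meas[OF h] .
  have ae: "AE x in M1. integrable M2 (\<lambda>t. h t * k x t)"
    using S.AE_int[of h] h unfolding PI_S by auto
  show ?thesis unfolding AE_PI_iff using ae AE_space
  proof eventually_elim
    case (elim x)
    note [measurable] = elim(2)
    have ik: "integrable M2 (\<lambda>t. k x t)"
      using p1_eq[OF elim(2)] by (intro integrableI_nn_integral_finite[where x="p1 x"]) (auto simp: k_nn)
    have "(\<integral>t. (h t - c) * k x t \<partial>M2) = (\<integral>t. h t * k x t - c * k x t \<partial>M2)"
      by (simp add: algebra_simps)
    also have "\<dots> = (\<integral>t. h t * k x t \<partial>M2) - c * p1 x"
      using elim(1) ik by (simp add: int_k1[OF elim(2)])
    finally show ?case
      by (simp add: Aop_def diff_divide_distrib)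
  qed
qed

lemma Bop_scale: "Bop (\<lambda>y. c * f y) t = c * Bop f t"
  by (simp add: Bop_def mult.assoc)

lemma frac_le: "0 \<le> (a::real) \<Longrightarrow> 0 \<le> b \<Longrightarrow> 0 \<le> c \<Longrightarrow> c * (a / (c * b)) \<le> a / b"
  by (cases "c = 0") (auto simp: divide_nonneg_nonneg)

lemma frac_le2: "0 \<le> (a::real) \<Longrightarrow> 0 \<le> b \<Longrightarrow> 0 \<le> c \<Longrightarrow> a / (c * b) * b \<le> a / c"
  by (cases "b = 0") (auto simp: divide_nonneg_nonneg)

lemma U_eq:
  assumes f: "f \<in> L2 PI"
  shows "AE x in PI. kernel_op K1 f x = Aop (Bop f) x"
proof -
  have fm[measurable]: "f \<in> borel_measurable M1" using L2_PI_meas[OF f] .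
  define G where "G t = (\<integral>\<^sup>+y. ennreal \<bar>f y\<bar> * ennreal (k y t) \<partial>M1)" for t
  have Gm[measurable]: "G \<in> borel_measurable M2" unfolding G_def by measurable
  define Phi where "Phi x = (\<integral>\<^sup>+t. ennreal (k x t / (p1 x * p2 t)) * G t \<partial>M2)" for x
  have Phim[measurable]: "Phi \<in> borel_measurable M1" unfolding Phi_def by measurable
  have "(\<integral>\<^sup>+x. ennreal (p1 x) * Phi x \<partial>M1) \<le> (\<integral>\<^sup>+x. \<integral>\<^sup>+t. ennreal (k x t) * (ennreal (1 / p2 t) * G t) \<partial>M2 \<partial>M1)"
  proof (rule nn_integral_mono)
    fix x assume x: "x \<in> space M1"
    note [measurable] = x
    have "ennreal (p1 x) * Phi x = (\<integral>\<^sup>+t. ennreal (p1 x) * (ennreal (k x t / (p1 x * p2 t)) * G t) \<partial>M2)"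
      unfolding Phi_def by (rule nn_integral_cmult[symmetric]) measurable
    also have "\<dots> \<le> (\<integral>\<^sup>+t. ennreal (k x t) * (ennreal (1 / p2 t) * G t) \<partial>M2)"
    proof (rule nn_integral_mono)
      fix t assume t: "t \<in> space M2"
      have "ennreal (p1 x) * ennreal (k x t / (p1 x * p2 t)) = ennreal (p1 x * (k x t / (p1 x * p2 t)))"
        by (rule ennreal_mult[symmetric]) (auto simp: p1_nn k_nn p2_nn)
      also have "\<dots> \<le> ennreal (k x t / p2 t)"
        by (intro ennreal_leI frac_le) (auto simp: k_nn p1_nn p2_nn)
      also have "\<dots> = ennreal (k x t) * ennreal (1 / p2 t)"
        by (simp add: ennreal_mult[symmetric] k_nn p2_nn)
      finally show "ennreal (p1 x) * (ennreal (k x t / (p1 x * p2 t)) * G t) \<le> ennreal (k x t) * (ennreal (1 / p2 t) * G t)"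
        by (metis mult.assoc mult_right_mono zero_le)
    qed
    finally show "ennreal (p1 x) * Phi x \<le> (\<integral>\<^sup>+t. ennreal (k x t) * (ennreal (1 / p2 t) * G t) \<partial>M2)" .
  qed
  also have "\<dots> = (\<integral>\<^sup>+t. \<integral>\<^sup>+x. ennreal (k x t) * (ennreal (1 / p2 t) * G t) \<partial>M1 \<partial>M2)"
    by (rule P.Fubini'[symmetric]) measurable
  also have "\<dots> = (\<integral>\<^sup>+t. ennreal (p2 t) * (ennreal (1 / p2 t) * G t) \<partial>M2)"
    by (rule nn_integral_cong) (simp add: nn_integral_multc p2_eq)
  also have "\<dots> \<le> (\<integral>\<^sup>+t. G t \<partial>M2)"
  proof (rule nn_integral_mono)
    fix t assume t: "t \<in> space M2"
    have "ennreal (p2 t) * ennreal (1 / p2 t) \<le> 1"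
      by (cases "p2 t = 0") (simp_all add: ennreal_mult[symmetric] p2_nn)
    then show "ennreal (p2 t) * (ennreal (1 / p2 t) * G t) \<le> G t"
      by (metis mult.assoc mult_right_mono mult_1 zero_le)
  qed
  also have "\<dots> = (\<integral>\<^sup>+y. ennreal (p1 y) * ennreal \<bar>f y\<bar> \<partial>M1)"
    unfolding G_def by (rule nnF) measurable
  also have "\<dots> < \<infinity>" using L2_PI_nn_abs[OF f] .
  finally have "(\<integral>\<^sup>+x. ennreal (p1 x) * Phi x \<partial>M1) \<noteq> \<infinity>" by simp
  then have aePhi: "AE x in M1. ennreal (p1 x) * Phi x \<noteq> \<infinity>"
    by (intro nn_integral_PInf_AE) measurable
  show ?thesis unfolding AE_PI_iff using aePhi AE_space
  proof eventually_elim
    case (elim x)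
    note x[measurable] = elim(2)
    show ?case
    proof
    assume p: "0 < p1 x"
    have Phix: "Phi x < \<infinity>" using elim(1) p by (simp add: ennreal_mult_eq_top_iff top.not_eq_extremum)
    define w where "w y t = k x t * k y t / (p1 x * p2 t)" for y t
    have wm[measurable]: "(\<lambda>(y,t). w y t) \<in> borel_measurable (M1 \<Otimes>\<^sub>M M2)" unfolding w_def by measurable
    have w_nn: "\<And>y t. 0 \<le> w y t" unfolding w_def by (simp add: k_nn p1_nn p2_nn)
    define u where "u y = (\<integral>\<^sup>+t. ennreal (w y t) \<partial>M2)" for y
    have um[measurable]: "u \<in> borel_measurable M1" unfolding u_def by measurable
    have wsplit: "\<And>y t. ennreal (w y t) = ennreal (k x t / (p1 x * p2 t)) * ennreal (k y t)"
      unfolding w_def by (subst ennreal_mult[symmetric]) (auto simp: k_nn p1_nn p2_nn)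
    have "(\<integral>\<^sup>+y. u y \<partial>M1) = (\<integral>\<^sup>+t. \<integral>\<^sup>+y. ennreal (k x t / (p1 x * p2 t)) * ennreal (k y t) \<partial>M1 \<partial>M2)"
      unfolding u_def wsplit by (rule P.Fubini'[symmetric]) measurable
    also have "\<dots> = (\<integral>\<^sup>+t. ennreal (k x t / (p1 x * p2 t)) * ennreal (p2 t) \<partial>M2)"
      by (rule nn_integral_cong) (simp add: nn_integral_cmult p2_eq)
    also have "\<dots> \<le> (\<integral>\<^sup>+t. ennreal (k x t) * ennreal (1 / p1 x) \<partial>M2)"
    proof (rule nn_integral_mono)
      fix t assume "t \<in> space M2"
      have "ennreal (k x t / (p1 x * p2 t)) * ennreal (p2 t) = ennreal (k x t / (p1 x * p2 t) * p2 t)"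
        by (rule ennreal_mult[symmetric]) (auto simp: p1_nn k_nn p2_nn)
      also have "\<dots> \<le> ennreal (k x t / p1 x)"
        by (intro ennreal_leI frac_le2) (auto simp: k_nn p1_nn p2_nn)
      also have "\<dots> = ennreal (k x t) * ennreal (1 / p1 x)"
        by (simp add: ennreal_mult[symmetric] k_nn p1_nn)
      finally show "ennreal (k x t / (p1 x * p2 t)) * ennreal (p2 t) \<le> ennreal (k x t) * ennreal (1 / p1 x)" .
    qed
    also have "\<dots> = ennreal (p1 x) * ennreal (1 / p1 x)"
      by (simp add: nn_integral_multc p1_eq[OF x, symmetric])
    also have "\<dots> < \<infinity>" by (simp add: ennreal_mult_less_top)
    finally have "(\<integral>\<^sup>+y. u y \<partial>M1) < \<infinity>" .
    then have aeu: "AE y in M1. u y \<noteq> \<infinity>"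
      by (intro nn_integral_PInf_AE) auto
    have "kernel_op K1 f x = integral\<^sup>L (density M1 u) f"
      by (simp add: kernel_op_def K1_def u_def[abs_def] w_def)
    also have "density M1 u = density M1 (\<lambda>y. ennreal (enn2real (u y)))"
      by (rule density_cong) (use aeu in \<open>auto simp: less_top\<close>)
    also have "integral\<^sup>L \<dots> f = (\<integral>y. enn2real (u y) * f y \<partial>M1)"
      by (subst integral_density) auto
    also have "\<dots> = (\<integral>y. (\<integral>t. w y t \<partial>M2) * f y \<partial>M1)"
      by (rule Bochner_Integration.integral_cong[OF refl]) (simp add: u_def integral_eq_nn_integral w_nn)
    also have "\<dots> = (\<integral>y. \<integral>t. f y * w y t \<partial>M2 \<partial>M1)"
      by (simp add: mult.commute)
    also have "\<dots> = (\<integral>t. \<integral>y. f y * w y t \<partial>M1 \<partial>M2)"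
    proof -
      have "(\<integral>\<^sup>+z. ennreal (norm ((\<lambda>(y,t). f y * w y t) z)) \<partial>(M1 \<Otimes>\<^sub>M M2))
          = (\<integral>\<^sup>+t. \<integral>\<^sup>+y. ennreal (norm (f y * w y t)) \<partial>M1 \<partial>M2)"
      proof -
        have m1: "(\<lambda>z. ennreal (norm ((\<lambda>(y,t). f y * w y t) z))) \<in> borel_measurable (M1 \<Otimes>\<^sub>M M2)" by measurable
        show ?thesis using P.nn_integral_snd[OF m1] by simp
      qed
      also have "\<dots> = Phi x"
        unfolding Phi_def
      proof (rule nn_integral_cong)
        fix t assume "t \<in> space M2"
        note [measurable] = this
        have "(\<integral>\<^sup>+y. ennreal (norm (f y * w y t)) \<partial>M1) = (\<integral>\<^sup>+y. ennreal (k x t / (p1 x * p2 t)) * (ennreal \<bar>f y\<bar> * ennreal (k y t)) \<partial>M1)"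
          by (rule nn_integral_cong) (simp add: abs_mult w_nn wsplit ennreal_mult mult_ac)
        also have "\<dots> = ennreal (k x t / (p1 x * p2 t)) * G t"
          unfolding G_def by (rule nn_integral_cmult) measurable
        finally show "(\<integral>\<^sup>+y. ennreal (norm (f y * w y t)) \<partial>M1) = ennreal (k x t / (p1 x * p2 t)) * G t" .
      qed
      finally have "integrable (M1 \<Otimes>\<^sub>M M2) (\<lambda>(y,t). f y * w y t)"
        using Phix by (subst integrable_iff_bounded) simp
      from P.Fubini_integral[OF this] show ?thesis by simp
    qed
    also have "\<dots> = (\<integral>t. Bop f t * k x t \<partial>M2) / p1 x"
    proof -
      have "\<And>y t. f y * w y t = (f y * k y t) * (k x t / (p1 x * p2 t))"
        by (simp add: w_def)
      moreover have "\<And>t. (\<integral>y. f y * k y t \<partial>M1) * (k x t / (p1 x * p2 t)) = Bop f t * k x t / p1 x"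
        by (simp add: Bop_def divide_inverse inverse_mult_distrib mult_ac)
      ultimately show ?thesis by simp
    qed
    also have "\<dots> = Aop (Bop f) x" by (simp add: Aop_def)
    finally show "kernel_op K1 f x = Aop (Bop f) x" .
    qed
  qed
qed

end


lemma L2_diff_const:
  assumes fm: "finite_measure M" and g: "g \<in> L2 M"
  shows "(\<lambda>x. g x - c) \<in> L2 M"
proof -
  interpret F: finite_measure M by (rule fm)
  have gm[measurable]: "g \<in> borel_measurable M" and g2: "integrable M (\<lambda>x. (g x)\<^sup>2)" using g by (auto simp: L2_def)
  have gi: "integrable M g" using F.square_integrable_imp_integrable[OF gm g2] .
  have "integrable M (\<lambda>x. (g x)\<^sup>2 + c\<^sup>2 - 2 * c * g x)"
    using g2 gi by (intro Bochner_Integration.integrable_diff Bochner_Integration.integrable_add integrable_mult_right) auto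
  then have "integrable M (\<lambda>x. (g x - c)\<^sup>2)"
    by (simp add: power2_diff mult_ac)
  then show ?thesis by (simp add: L2_def)
qed

lemma L2_scale:
  assumes g: "g \<in> L2 M"
  shows "(\<lambda>x. c * g x) \<in> L2 M"
proof -
  have gm[measurable]: "g \<in> borel_measurable M" and g2: "integrable M (\<lambda>x. (g x)\<^sup>2)" using g by (auto simp: L2_def)
  have "integrable M (\<lambda>x. c\<^sup>2 * (g x)\<^sup>2)" using g2 by (intro integrable_mult_right)
  then show ?thesis by (simp add: L2_def power_mult_distrib)
qed

lemma var_eq:
  assumes fm: "finite_measure M" and one: "measure M (space M) = 1" and g: "g \<in> L2 M"
  shows "(\<integral>x. (g x - c)\<^sup>2 \<partial>M) = (\<integral>x. (g x)\<^sup>2 \<partial>M) - 2 * c * (\<integral>x. g x \<partial>M) + c\<^sup>2"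
proof -
  interpret F: finite_measure M by (rule fm)
  have gm[measurable]: "g \<in> borel_measurable M" and g2: "integrable M (\<lambda>x. (g x)\<^sup>2)" using g by (auto simp: L2_def)
  have gi: "integrable M g" using F.square_integrable_imp_integrable[OF gm g2] .
  have "(\<integral>x. (g x - c)\<^sup>2 \<partial>M) = (\<integral>x. (g x)\<^sup>2 + c\<^sup>2 - 2 * c * g x \<partial>M)"
    by (simp add: power2_diff mult_ac)
  also have "\<dots> = (\<integral>x. (g x)\<^sup>2 \<partial>M) + c\<^sup>2 - 2 * c * (\<integral>x. g x \<partial>M)"
    using g2 gi one by (simp add: Bochner_Integration.integral_diff Bochner_Integration.integral_add)
  finally show ?thesis by simp
qed

lemma int_diff_const:
  fixes g :: "'a \<Rightarrow> real"
  assumes fm: "finite_measure M" and one: "measure M (space M) = 1" and gi: "integrable M g"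
  shows "(\<integral>x. g x - c \<partial>M) = (\<integral>x. g x \<partial>M) - c"
proof -
  interpret F: finite_measure M by (rule fm)
  have c: "(\<integral>x. c \<partial>M) = c" using one lebesgue_integral_const[of M c] by simp
  have i2: "integrable M (\<lambda>x. c)" by simp
  show ?thesis using Bochner_Integration.integral_diff[OF gi i2] c by simp
qed

lemma L2_prod:
  fixes f g :: "'a \<Rightarrow> real"
  assumes "f \<in> L2 M" "g \<in> L2 M"
  shows "integrable M (\<lambda>x. f x * g x)"
    and "(\<integral>x. f x * g x \<partial>M)\<^sup>2 \<le> (\<integral>x. (f x)\<^sup>2 \<partial>M) * (\<integral>x. (g x)\<^sup>2 \<partial>M)"
  using assms CS2[of f M g] by (auto simp: L2_def)

context twostage begin

definition "B0 f t = Bop f t - (\<integral>x. f x \<partial>PI)"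
definition "A0 h x = Aop h x - (\<integral>t. h t \<partial>MU)"
definition "ballPI = {f \<in> L2 PI. L2_normsq PI f \<le> 1}"
definition "ballMU = {h \<in> L2 MU. L2_normsq MU h \<le> 1}"
definition "bB = (SUP f\<in>ballPI. L2_normsq MU (B0 f))"
definition "SU = (SUP f\<in>ballPI. L2_normsq PI (\<lambda>x. kernel_op K1 f x - (\<integral>y. f y \<partial>PI)))"

lemma MU_one: "measure MU (space MU) = 1"
proof -
  interpret S: twostage M2 M1 "\<lambda>t x. k x t" p2 p1 by (rule swap)
  show ?thesis using S.measure_PI_space unfolding PI_S .
qed

lemma B0_L2:
  assumes f: "f \<in> L2 PI"
  shows "B0 f \<in> L2 MU" and "(\<integral>t. B0 f t \<partial>MU) = 0"
    and "(\<integral>t. (B0 f t)\<^sup>2 \<partial>MU) \<le> (\<integral>x. (f x)\<^sup>2 \<partial>PI)"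
proof -
  have b: "Bop f \<in> L2 MU" using Bop_L2(1)[OF f] .
  show "B0 f \<in> L2 MU" unfolding B0_def[abs_def] by (rule L2_diff_const[OF MU_fin b])
  have bi: "integrable MU (Bop f)"
    using b finite_measure.square_integrable_imp_integrable[OF MU_fin] by (auto simp: L2_def)
  show "(\<integral>t. B0 f t \<partial>MU) = 0"
    unfolding B0_def using int_diff_const[OF MU_fin MU_one bi] E_Bop[OF f] by simp
  have "(\<integral>t. (B0 f t)\<^sup>2 \<partial>MU) = (\<integral>t. (Bop f t)\<^sup>2 \<partial>MU) - 2 * (\<integral>x. f x \<partial>PI) * (\<integral>t. Bop f t \<partial>MU) + (\<integral>x. f x \<partial>PI)\<^sup>2"
    unfolding B0_def by (rule var_eq[OF MU_fin MU_one b])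
  also have "\<dots> = (\<integral>t. (Bop f t)\<^sup>2 \<partial>MU) - (\<integral>x. f x \<partial>PI)\<^sup>2"
    using E_Bop[OF f] by (simp add: power2_eq_square)
  also have "\<dots> \<le> (\<integral>t. (Bop f t)\<^sup>2 \<partial>MU)" by simp
  also have "\<dots> \<le> (\<integral>x. (f x)\<^sup>2 \<partial>PI)"
    using Bop_L2(2)[OF f] L2_nsq[OF b] L2_nsq[OF f]
    by (simp add: ennreal_le_iff integral_nonneg_AE)
  finally show "(\<integral>t. (B0 f t)\<^sup>2 \<partial>MU) \<le> (\<integral>x. (f x)\<^sup>2 \<partial>PI)" .
qed

lemma B0_S: "twostage.B0 M2 (\<lambda>t x. k x t) p2 p1 = A0"
  by (simp add: twostage.B0_def[OF swap] Bop_S PI_S A0_def fun_eq_iff)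

lemma A0_L2:
  assumes h: "h \<in> L2 MU"
  shows "A0 h \<in> L2 PI" and "(\<integral>x. A0 h x \<partial>PI) = 0"
    and "(\<integral>x. (A0 h x)\<^sup>2 \<partial>PI) \<le> (\<integral>t. (h t)\<^sup>2 \<partial>MU)"
proof -
  interpret S: twostage M2 M1 "\<lambda>t x. k x t" p2 p1 by (rule swap)
  show "A0 h \<in> L2 PI" "(\<integral>x. A0 h x \<partial>PI) = 0" "(\<integral>x. (A0 h x)\<^sup>2 \<partial>PI) \<le> (\<integral>t. (h t)\<^sup>2 \<partial>MU)"
    using S.B0_L2[of h] h unfolding B0_S PI_S MU_S by auto
qed

lemma Aop_L2:
  assumes h: "h \<in> L2 MU"
  shows "Aop h \<in> L2 PI"
proof -
  interpret S: twostage M2 M1 "\<lambda>t x. k x t" p2 p1 by (rule swap)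
  show ?thesis using S.Bop_L2(1)[of h] h unfolding Bop_S PI_S MU_S by auto
qed

lemma L2_MU_int: "h \<in> L2 MU \<Longrightarrow> integrable MU h"
proof -
  interpret S: twostage M2 M1 "\<lambda>t x. k x t" p2 p1 by (rule swap)
  show "h \<in> L2 MU \<Longrightarrow> integrable MU h" using S.L2_PI unfolding PI_S .
qed

lemma adjoint0:
  assumes f: "f \<in> L2 PI" and h: "h \<in> L2 MU"
  shows "(\<integral>x. A0 h x * f x \<partial>PI) = (\<integral>t. h t * B0 f t \<partial>MU)"
proof -
  have i1: "integrable PI (\<lambda>x. Aop h x * f x)" using L2_prod(1)[OF Aop_L2[OF h] f] .
  have i2: "integrable MU (\<lambda>t. h t * Bop f t)" using L2_prod(1)[OF h Bop_L2(1)[OF f]] .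
  have fi: "integrable PI f" using L2_PI[OF f] .
  have hi: "integrable MU h" using L2_MU_int[OF h] .
  have "(\<integral>x. A0 h x * f x \<partial>PI) = (\<integral>x. Aop h x * f x - (\<integral>t. h t \<partial>MU) * f x \<partial>PI)"
    by (simp add: A0_def algebra_simps)
  also have "\<dots> = (\<integral>x. Aop h x * f x \<partial>PI) - (\<integral>t. h t \<partial>MU) * (\<integral>x. f x \<partial>PI)"
    using i1 fi by (simp add: Bochner_Integration.integral_diff)
  also have "\<dots> = (\<integral>t. h t * Bop f t \<partial>MU) - (\<integral>x. f x \<partial>PI) * (\<integral>t. h t \<partial>MU)"
    using adjoint[OF f h] by simp
  also have "\<dots> = (\<integral>t. h t * Bop f t - (\<integral>x. f x \<partial>PI) * h t \<partial>MU)"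
    using i2 hi by (simp add: Bochner_Integration.integral_diff)
  also have "\<dots> = (\<integral>t. h t * B0 f t \<partial>MU)"
    by (simp add: B0_def algebra_simps)
  finally show ?thesis .
qed

lemma nsq_nonneg: "0 \<le> (\<integral>x. (f x)\<^sup>2 \<partial>M)" for f :: "_ \<Rightarrow> real"
  by (rule integral_nonneg_AE) simp

lemma bB_le1: "bB \<le> 1"
  unfolding bB_def
proof (rule SUP_least)
  fix f assume "f \<in> ballPI"
  then have f: "f \<in> L2 PI" and n: "L2_normsq PI f \<le> 1" by (auto simp: ballPI_def)
  have "L2_normsq MU (B0 f) = ennreal (\<integral>t. (B0 f t)\<^sup>2 \<partial>MU)" using L2_nsq[OF B0_L2(1)[OF f]] .
  also have "\<dots> \<le> ennreal (\<integral>x. (f x)\<^sup>2 \<partial>PI)" using B0_L2(3)[OF f] by (rule ennreal_leI)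
  also have "\<dots> = L2_normsq PI f" using L2_nsq[OF f] by simp
  finally show "L2_normsq MU (B0 f) \<le> 1" using n by simp
qed

definition "br = enn2real bB"

lemma bB_eq: "bB = ennreal br" and br_nn: "0 \<le> br"
  using bB_le1 by (auto simp: br_def ennreal_enn2real_if top_unique)

lemma B0_ball: "f \<in> ballPI \<Longrightarrow> (\<integral>t. (B0 f t)\<^sup>2 \<partial>MU) \<le> br"
proof -
  assume "f \<in> ballPI"
  then have "L2_normsq MU (B0 f) \<le> bB" unfolding bB_def by (rule SUP_upper)
  then have "ennreal (\<integral>t. (B0 f t)\<^sup>2 \<partial>MU) \<le> ennreal br"
    using L2_nsq[OF B0_L2(1)] \<open>f \<in> ballPI\<close> bB_eq by (auto simp: ballPI_def)
  then show ?thesis using br_nn by (simp add: ennreal_le_iff)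
qed

lemma B0_hom:
  assumes w: "w \<in> L2 PI"
  shows "(\<integral>t. (B0 w t)\<^sup>2 \<partial>MU) \<le> br * (\<integral>x. (w x)\<^sup>2 \<partial>PI)"
proof (cases "(\<integral>x. (w x)\<^sup>2 \<partial>PI) = 0")
  case True
  then show ?thesis using B0_L2(3)[OF w] nsq_nonneg[where f="B0 w" and M=MU] by simp
next
  case False
  define n where "n = (\<integral>x. (w x)\<^sup>2 \<partial>PI)"
  have npos: "0 < n" using False nsq_nonneg[where f=w and M=PI] unfolding n_def by linarith
  define c where "c = 1 / sqrt n"
  have c2: "c\<^sup>2 * n = 1" using npos by (simp add: c_def power_divide)
  have cpos: "0 < c" using npos by (simp add: c_def)
  define w' where "w' x = c * w x" for x
  have w': "w' \<in> L2 PI" unfolding w'_def[abs_def] by (rule L2_scale[OF w])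
  have "(\<integral>x. (w' x)\<^sup>2 \<partial>PI) = c\<^sup>2 * n"
    by (simp add: w'_def n_def power_mult_distrib)
  then have "L2_normsq PI w' = 1" using L2_nsq[OF w'] c2 by simp
  then have "w' \<in> ballPI" using w' by (simp add: ballPI_def)
  then have "(\<integral>t. (B0 w' t)\<^sup>2 \<partial>MU) \<le> br" by (rule B0_ball)
  moreover have "\<And>t. B0 w' t = c * B0 w t"
    by (simp add: B0_def w'_def[abs_def] Bop_scale algebra_simps)
  ultimately have "c\<^sup>2 * (\<integral>t. (B0 w t)\<^sup>2 \<partial>MU) \<le> br"
    by (simp add: power_mult_distrib)
  then have "c\<^sup>2 * (\<integral>t. (B0 w t)\<^sup>2 \<partial>MU) * n \<le> br * n"
    using npos by (simp add: mult_right_mono)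
  then have "(c\<^sup>2 * n) * (\<integral>t. (B0 w t)\<^sup>2 \<partial>MU) \<le> br * n" by (simp add: mult_ac)
  then show ?thesis using c2 by (simp add: n_def)
qed

definition "bA = (SUP h\<in>ballMU. L2_normsq PI (A0 h))"

lemma nsq_le1: "f \<in> L2 M \<Longrightarrow> L2_normsq M f \<le> 1 \<Longrightarrow> (\<integral>x. (f x)\<^sup>2 \<partial>M) \<le> 1"
  using L2_nsq[of f M] by (simp add: ennreal_le_1)

lemma bA_le: "bA \<le> bB"
  unfolding bA_def
proof (rule SUP_least)
  fix h assume "h \<in> ballMU"
  then have h: "h \<in> L2 MU" and hn: "L2_normsq MU h \<le> 1" by (auto simp: ballMU_def)
  define w where "w = A0 h"
  have w: "w \<in> L2 PI" unfolding w_def by (rule A0_L2(1)[OF h])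
  define n where "n = (\<integral>x. (w x)\<^sup>2 \<partial>PI)"
  have nn: "0 \<le> n" unfolding n_def by (rule nsq_nonneg)
  have "n = (\<integral>x. A0 h x * w x \<partial>PI)" by (simp add: n_def w_def power2_eq_square)
  also have "\<dots> = (\<integral>t. h t * B0 w t \<partial>MU)" by (rule adjoint0[OF w h])
  finally have "n\<^sup>2 \<le> (\<integral>t. (h t)\<^sup>2 \<partial>MU) * (\<integral>t. (B0 w t)\<^sup>2 \<partial>MU)"
    using L2_prod(2)[OF h B0_L2(1)[OF w]] by simp
  also have "\<dots> \<le> 1 * (br * n)"
    by (intro mult_mono nsq_le1[OF h hn] B0_hom[OF w, folded n_def]) (auto intro: nsq_nonneg)
  finally have n2: "n * n \<le> br * n" by (simp add: power2_eq_square)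
  have "n \<le> br"
  proof (cases "n = 0")
    case True then show ?thesis using br_nn by simp
  next
    case False then have "0 < n" using nn by simp
    then show ?thesis using n2 by (simp add: mult_le_cancel_right)
  qed
  then have "ennreal n \<le> ennreal br" by (rule ennreal_leI)
  then show "L2_normsq PI (A0 h) \<le> bB"
    using L2_nsq[OF w] bB_eq by (simp add: n_def w_def)
qed

lemma U0_eq:
  assumes f: "f \<in> L2 PI"
  shows "AE x in PI. kernel_op K1 f x - (\<integral>y. f y \<partial>PI) = A0 (B0 f) x"
  using U_eq[OF f] Aop_minus[OF Bop_L2(1)[OF f], of "\<integral>y. f y \<partial>PI"]
proof eventually_elim
  case (elim x)
  then show ?case using B0_L2(2)[OF f] by (simp add: A0_def B0_def[abs_def])
qed

lemma nsq_U0: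
  assumes f: "f \<in> L2 PI"
  shows "L2_normsq PI (\<lambda>x. kernel_op K1 f x - (\<integral>y. f y \<partial>PI)) = ennreal (\<integral>x. (A0 (B0 f) x)\<^sup>2 \<partial>PI)"
proof -
  have "L2_normsq PI (\<lambda>x. kernel_op K1 f x - (\<integral>y. f y \<partial>PI)) = L2_normsq PI (A0 (B0 f))"
    unfolding L2_normsq_def using U0_eq[OF f] by (intro nn_integral_cong_AE) auto
  also have "\<dots> = ennreal (\<integral>x. (A0 (B0 f) x)\<^sup>2 \<partial>PI)" by (rule L2_nsq[OF A0_L2(1)[OF B0_L2(1)[OF f]]])
  finally show ?thesis .
qed

lemma SU_le: "SU \<le> bB\<^sup>2"
proof -
  interpret S: twostage M2 M1 "\<lambda>t x. k x t" p2 p1 by (rule swap)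
  have SbB: "S.bB = bA"
    by (simp add: S.bB_def bA_def twostage.ballPI_def[OF swap] ballMU_def PI_S MU_S B0_S)
  have Sbr: "S.br = enn2real bA" by (simp add: S.br_def SbB)
  have bA_fin: "bA = ennreal (enn2real bA)" using S.bB_eq SbB Sbr by simp
  have "ennreal (enn2real bA) \<le> ennreal br" using bA_le bA_fin bB_eq by simp
  then have ar_le: "enn2real bA \<le> br" using br_nn by (simp add: ennreal_le_iff)
  show ?thesis unfolding SU_def
  proof (rule SUP_least)
    fix f assume fb: "f \<in> ballPI"
    then have f: "f \<in> L2 PI" by (simp add: ballPI_def)
    define g where "g = B0 f"
    have g: "g \<in> L2 MU" unfolding g_def by (rule B0_L2(1)[OF f])
    have "(\<integral>x. (A0 g x)\<^sup>2 \<partial>PI) \<le> enn2real bA * (\<integral>t. (g t)\<^sup>2 \<partial>MU)"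
      using S.B0_hom[of g] g unfolding PI_S MU_S B0_S Sbr by simp
    also have "\<dots> \<le> br * br"
      using ar_le B0_ball[OF fb] br_nn by (auto simp: g_def intro!: mult_mono enn2real_nonneg)
    finally have "(\<integral>x. (A0 g x)\<^sup>2 \<partial>PI) \<le> br\<^sup>2" by (simp add: power2_eq_square)
    then show "L2_normsq PI (\<lambda>x. kernel_op K1 f x - (\<integral>y. f y \<partial>PI)) \<le> bB\<^sup>2"
      using nsq_U0[OF f] bB_eq ennreal_power[OF br_nn, of 2] by (simp add: g_def ennreal_leI)
  qed
qed

lemma SU_ge: "bB\<^sup>2 \<le> SU"
proof -
  have "SU \<le> ennreal (br\<^sup>2)" using SU_le bB_eq ennreal_power[OF br_nn, of 2] by simp
  then have "SU < top" using ennreal_less_top[of "br\<^sup>2"] by (rule le_less_trans)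
  then have SUfin: "SU = ennreal (enn2real SU)" by simp
  define sr where "sr = enn2real SU"
  have sr_nn: "0 \<le> sr" by (simp add: sr_def)
  have "bB \<le> ennreal (sqrt sr)" unfolding bB_def
  proof (rule SUP_least)
    fix f assume fb: "f \<in> ballPI"
    then have f: "f \<in> L2 PI" and fn: "L2_normsq PI f \<le> 1" by (auto simp: ballPI_def)
    define g where "g = B0 f"
    have g: "g \<in> L2 MU" unfolding g_def by (rule B0_L2(1)[OF f])
    define n where "n = (\<integral>t. (g t)\<^sup>2 \<partial>MU)"
    have nn: "0 \<le> n" unfolding n_def by (rule nsq_nonneg)
    have "n = (\<integral>t. g t * B0 f t \<partial>MU)" by (simp add: n_def g_def power2_eq_square)
    also have "\<dots> = (\<integral>x. A0 g x * f x \<partial>PI)" by (rule adjoint0[OF f g, symmetric])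
    finally have "n\<^sup>2 \<le> (\<integral>x. (A0 g x)\<^sup>2 \<partial>PI) * (\<integral>x. (f x)\<^sup>2 \<partial>PI)"
      using L2_prod(2)[OF A0_L2(1)[OF g] f] by simp
    also have "\<dots> \<le> (\<integral>x. (A0 g x)\<^sup>2 \<partial>PI) * 1"
      by (intro mult_left_mono nsq_le1[OF f fn] nsq_nonneg)
    also have "\<dots> \<le> sr"
    proof -
      have "L2_normsq PI (\<lambda>x. kernel_op K1 f x - (\<integral>y. f y \<partial>PI)) \<le> SU"
        unfolding SU_def using fb by (rule SUP_upper)
      then have "ennreal (\<integral>x. (A0 g x)\<^sup>2 \<partial>PI) \<le> ennreal sr"
        using nsq_U0[OF f] SUfin by (simp add: g_def sr_def)
      then show ?thesis using sr_nn by (simp add: ennreal_le_iff)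
    qed
    finally have "n\<^sup>2 \<le> sr" .
    then have "n \<le> sqrt sr" by (rule real_le_rsqrt)
    then show "L2_normsq MU (B0 f) \<le> ennreal (sqrt sr)"
      using L2_nsq[OF g] by (simp add: n_def g_def ennreal_leI)
  qed
  then have "br \<le> sqrt sr" using bB_eq sr_nn by (simp add: ennreal_le_iff)
  then have "br\<^sup>2 \<le> (sqrt sr)\<^sup>2" using br_nn by (rule power_mono)
  then have "br\<^sup>2 \<le> sr" using sr_nn by simp
  then have "ennreal (br\<^sup>2) \<le> ennreal sr" by (rule ennreal_leI)
  then show ?thesis using bB_eq SUfin ennreal_power[OF br_nn, of 2] by (simp add: sr_def)
qed

lemma SU_eq: "SU = bB\<^sup>2"
  using SU_le SU_ge by (rule antisym)

lemma A0_S: "twostage.A0 M1 (\<lambda>t x. k x t) p2 p1 = B0"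
  by (simp add: twostage.A0_def[OF swap] Aop_S MU_S B0_def fun_eq_iff)

lemma SU_sym: "SU = twostage.SU M2 M1 (\<lambda>t x. k x t) p2 p1"
proof -
  interpret S: twostage M2 M1 "\<lambda>t x. k x t" p2 p1 by (rule swap)
  have SbB: "S.bB = bA"
    by (simp add: S.bB_def bA_def twostage.ballPI_def[OF swap] ballMU_def PI_S MU_S B0_S)
  have SbA: "S.bA = bB"
    by (simp add: S.bA_def bB_def twostage.ballMU_def[OF swap] ballPI_def PI_S MU_S B0_S A0_S)
  have "bA = bB" using bA_le S.bA_le SbB SbA by (simp add: antisym)
  then show ?thesis using SU_eq S.SU_eq SbB by simp
qed

end


lemma sf_leb: "sigma_finite_measure (lebesgue :: 'a::euclidean_space measure)"
proof (rule sigma_finite_measure.intro)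
  show "\<exists>A. countable A \<and> A \<subseteq> sets (lebesgue :: 'a measure) \<and> \<Union>A = space lebesgue \<and> (\<forall>a\<in>A. emeasure lebesgue a \<noteq> \<infinity>)"
  proof (intro exI[of _ "range (\<lambda>n::nat. cball (0::'a) (real n))"] conjI ballI)
    show "\<Union>(range (\<lambda>n::nat. cball (0::'a) (real n))) = space lebesgue"
      by (auto simp: real_arch_simple)
    fix a assume "a \<in> range (\<lambda>n::nat. cball (0::'a) (real n))"
    then obtain n where a: "a = cball (0::'a) (real n)" by auto
    have "emeasure lborel a < \<infinity>" unfolding a by (rule emeasure_bounded_finite) simp
    then show "emeasure lebesgue a \<noteq> \<infinity>" by (simp add: a)
  qed auto
qed

locale inst =
  fixes G :: "'a::euclidean_space set" and \<rho> :: "'a \<Rightarrow> real"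
  assumes G_meas: "G \<in> sets lebesgue"
    and G_pos: "emeasure lebesgue G > 0"
    and rho_pos: "\<And>x. x \<in> G \<Longrightarrow> \<rho> x > 0"
    and rho_int: "set_integrable lebesgue G \<rho>"
begin

definition "rho' x = indicator G x * \<rho> x"
definition "Z = (\<integral>y. indicator G y * \<rho> y \<partial>lebesgue)"
definition "k0 x t = indicator G x * indicator {0<..} t * (if t \<le> rho' x then 1 else 0 :: real)"
definition "kk x t = k0 x t / Z"
definition "q1 x = indicator G x * \<rho> x / Z"
definition "lv t = level_vol G \<rho> t"

lemma rho'_int: "integrable lebesgue rho'"
  using rho_int unfolding set_integrable_def rho'_def[abs_def] by simp

lemma rho'_meas[measurable]: "rho' \<in> borel_measurable lebesgue"
  using rho'_int by (rule borel_measurable_integrable)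

lemma G_meas'[measurable]: "G \<in> sets lebesgue" by (rule G_meas)

lemma rho'_nn: "0 \<le> rho' x"
  using rho_pos[of x] by (auto simp: rho'_def indicator_def less_imp_le)

lemma rho'_G: "x \<in> G \<Longrightarrow> rho' x = \<rho> x"
  by (simp add: rho'_def)

lemma Z_rho': "Z = (\<integral>y. rho' y \<partial>lebesgue)"
  by (simp add: Z_def rho'_def)

lemma nn_rho': "(\<integral>\<^sup>+x. ennreal (rho' x) \<partial>lebesgue) = ennreal Z"
  unfolding Z_rho' by (rule nn_integral_eq_integral[OF rho'_int]) (simp add: rho'_nn)

lemma Z_pos: "0 < Z"
proof -
  have Z_nn: "0 \<le> Z" unfolding Z_rho' by (rule integral_nonneg_AE) (simp add: rho'_nn)
  show ?thesis
  proof (rule ccontr)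
    assume "\<not> 0 < Z"
    then have "Z = 0" using Z_nn by simp
    then have "(\<integral>\<^sup>+x. ennreal (rho' x) \<partial>lebesgue) = 0" using nn_rho' by simp
    then have "AE x in lebesgue. ennreal (rho' x) = 0"
      by (subst (asm) nn_integral_0_iff_AE) auto
    then have "AE x in lebesgue. x \<notin> G"
    proof eventually_elim
      case (elim x)
      show ?case
      proof
        assume xG: "x \<in> G"
        then have "0 < \<rho> x" by (rule rho_pos)
        with elim xG show False by (simp add: rho'_def)
      qed
    qed
    then have "G \<in> null_sets lebesgue" using AE_iff_null_sets[OF G_meas] by simp
    then have "emeasure lebesgue G = 0" by (rule null_setsD1)
    then show False using G_pos by (simp del: emeasure_completion)
  qed
qed

lemma k0_nn: "0 \<le> k0 x t" by (simp add: k0_def)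
lemma k0_meas[measurable]: "(\<lambda>(x,t). k0 x t) \<in> borel_measurable (lebesgue \<Otimes>\<^sub>M lborel)"
  unfolding k0_def by measurable

lemma level_set_eq: "0 < t \<Longrightarrow> level_set G \<rho> t = {x \<in> space lebesgue. t \<le> rho' x}"
  by (auto simp: level_set_def rho'_def indicator_def)

lemma level_set_meas[measurable]: "0 < t \<Longrightarrow> level_set G \<rho> t \<in> sets lebesgue"
  unfolding level_set_eq by measurable

lemma k0_ind: "0 < t \<Longrightarrow> k0 x t = indicator (level_set G \<rho> t) x"
  by (auto simp: k0_def level_set_def rho'_def indicator_def)

lemma k0_ind2: "x \<in> G \<Longrightarrow> k0 x t = indicator {0<..\<rho> x} t"
  by (auto simp: k0_def rho'_def indicator_def)

lemma level_fin: "0 < t \<Longrightarrow> emeasure lebesgue (level_set G \<rho> t) < \<infinity>"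
proof -
  assume t: "0 < t"
  have "ennreal t * emeasure lebesgue (level_set G \<rho> t) = (\<integral>\<^sup>+x. ennreal t * indicator (level_set G \<rho> t) x \<partial>lebesgue)"
    using t by (simp add: nn_integral_cmult_indicator)
  also have "\<dots> \<le> (\<integral>\<^sup>+x. ennreal (rho' x) \<partial>lebesgue)"
    by (rule nn_integral_mono) (auto simp: level_set_eq[OF t] indicator_def intro: ennreal_leI)
  also have "\<dots> < \<infinity>" using nn_rho' by simp
  finally show ?thesis using t by (auto simp: ennreal_mult_less_top)
qed

lemma lv_eq: "0 < t \<Longrightarrow> emeasure lebesgue (level_set G \<rho> t) = ennreal (lv t)"
  using level_fin by (simp add: lv_def level_vol_def emeasure_eq_ennreal_measure less_top)

lemma lv_nn: "0 \<le> lv t" by (simp add: lv_def level_vol_def)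

lemma T1: "(\<integral>\<^sup>+t. ennreal (k0 x t) \<partial>lborel) = ennreal (rho' x)"
proof (cases "x \<in> G")
  case True
  then show ?thesis using rho_pos[OF True] by (simp add: k0_ind2 rho'_G ennreal_indicator)
next
  case False
  then show ?thesis by (simp add: k0_def rho'_def)
qed

lemma T2: "(\<integral>\<^sup>+x. ennreal (k0 x t) \<partial>lebesgue) = ennreal (indicator {0<..} t * lv t)"
proof (cases "0 < t")
  case True
  have "(\<integral>\<^sup>+x. ennreal (k0 x t) \<partial>lebesgue) = (\<integral>\<^sup>+x. indicator (level_set G \<rho> t) x \<partial>lebesgue)"
    by (simp add: k0_ind[OF True] ennreal_indicator)
  also have "\<dots> = emeasure lebesgue (level_set G \<rho> t)"
    by (rule nn_integral_indicator) (rule level_set_meas[OF True])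
  finally show ?thesis using lv_eq[OF True] True by simp
next
  case False
  then show ?thesis by (simp add: k0_def)
qed

sublocale L: sigma_finite_measure "lebesgue :: 'a measure" by (rule sf_leb)
sublocale P: pair_sigma_finite "lebesgue :: 'a measure" lborel
  by (rule pair_sigma_finite.intro[OF sf_leb sigma_finite_lborel])

lemma lvm[measurable]: "(\<lambda>t. indicator {0<..} t * lv t) \<in> borel_measurable lborel"
proof -
  have "(\<lambda>t. enn2real (\<integral>\<^sup>+x. ennreal (k0 x t) \<partial>lebesgue)) \<in> borel_measurable lborel" by measurable
  moreover have "\<And>t. enn2real (\<integral>\<^sup>+x. ennreal (k0 x t) \<partial>lebesgue) = indicator {0<..} t * lv t"
    by (simp add: T2 lv_nn)
  ultimately show ?thesis by simp
qed

lemma Z2: "(\<integral>r. indicator {0<..} r * lv r \<partial>lborel) = Z"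
proof -
  have "(\<integral>\<^sup>+r. ennreal (indicator {0<..} r * lv r) \<partial>lborel) = (\<integral>\<^sup>+r. \<integral>\<^sup>+x. ennreal (k0 x r) \<partial>lebesgue \<partial>lborel)"
    by (simp add: T2)
  also have "\<dots> = (\<integral>\<^sup>+x. \<integral>\<^sup>+r. ennreal (k0 x r) \<partial>lborel \<partial>lebesgue)"
    by (rule P.Fubini') measurable
  also have "\<dots> = ennreal Z" by (simp add: T1 nn_rho')
  finally have e: "(\<integral>\<^sup>+r. ennreal (indicator {0<..} r * lv r) \<partial>lborel) = ennreal Z" .
  have "(\<integral>r. indicator {0<..} r * lv r \<partial>lborel) = enn2real (\<integral>\<^sup>+r. ennreal (indicator {0<..} r * lv r) \<partial>lborel)"
    by (rule integral_eq_nn_integral) (auto simp: lv_nn)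
  also have "\<dots> = Z" using e Z_pos by simp
  finally show ?thesis .
qed


definition "q2 t = indicator {0<..} t * level_vol G \<rho> t / (\<integral>r. indicator {0<..} r * level_vol G \<rho> r \<partial>lborel)"

lemma q2_eq: "q2 t = indicator {0<..} t * lv t / Z"
  using Z2 by (simp add: q2_def lv_def[abs_def])

lemma q1_eq: "q1 x = rho' x / Z"
  by (simp add: q1_def rho'_def)

lemma kk_meas[measurable]: "(\<lambda>(x,t). kk x t) \<in> borel_measurable (lebesgue \<Otimes>\<^sub>M lborel)"
  unfolding kk_def by measurable

lemma ennreal_divZ: "0 \<le> a \<Longrightarrow> ennreal (a / Z) = ennreal a / ennreal Z"
  using Z_pos by (simp add: divide_ennreal)

lemma tw: "twostage lebesgue lborel kk q1 q2"
proof (rule twostage.intro[OF sf_leb sigma_finite_lborel], unfold_locales)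
  show "(\<lambda>(x, t). kk x t) \<in> borel_measurable (lebesgue \<Otimes>\<^sub>M lborel)" by (rule kk_meas)
  show "\<And>x t. 0 \<le> kk x t" using Z_pos by (simp add: kk_def k0_nn)
  show "\<And>x. 0 \<le> q1 x" using Z_pos by (simp add: q1_eq rho'_nn)
  show "\<And>t. 0 \<le> q2 t" using Z_pos by (simp add: q2_eq lv_nn)
  show "\<And>x. x \<in> space lebesgue \<Longrightarrow> ennreal (q1 x) = (\<integral>\<^sup>+t. ennreal (kk x t) \<partial>lborel)"
    by (simp add: kk_def q1_eq ennreal_divZ k0_nn rho'_nn nn_integral_divide T1)
  show "\<And>t. t \<in> space lborel \<Longrightarrow> ennreal (q2 t) = (\<integral>\<^sup>+x. ennreal (kk x t) \<partial>lebesgue)"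
    by (simp add: kk_def q2_eq ennreal_divZ k0_nn lv_nn nn_integral_divide T2)
  show "(\<integral>\<^sup>+x. ennreal (q1 x) \<partial>lebesgue) = 1"
  proof -
    have "(\<integral>\<^sup>+x. ennreal (q1 x) \<partial>lebesgue) = (\<integral>\<^sup>+x. ennreal (rho' x) \<partial>lebesgue) / ennreal Z"
      by (simp add: q1_eq ennreal_divZ rho'_nn nn_integral_divide)
    also have "\<dots> = 1" using Z_pos by (simp add: nn_rho' ennreal_eq_0_iff)
    finally show ?thesis .
  qed
qed

sublocale T: twostage "lebesgue :: 'a measure" lborel kk q1 q2 by (rule tw)

lemma target_eq: "target G \<rho> = T.PI"
  by (simp add: target_def T.PI_def q1_def Z_def)

lemma aux_eq: "aux_measure G \<rho> = T.MU"
  by (simp add: aux_measure_def T.MU_def q2_def)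

lemma kk_x: "x \<in> G \<Longrightarrow> kk x t = indicator {0<..\<rho> x} t / Z"
  by (simp add: kk_def k0_ind2)

lemma q1_G: "x \<in> G \<Longrightarrow> q1 x = \<rho> x / Z"
  by (simp add: q1_eq rho'_G)

lemma fracZ: "Z \<noteq> 0 \<Longrightarrow> (1 / Z) * (a / Z) / ((r / Z) * (l / Z)) = a / (r * (l::real))"
  by (simp add: divide_inverse inverse_mult_distrib mult_ac)

lemma slice_pt:
  assumes x: "x \<in> G" and A: "A \<in> sets lebesgue" and t0: "t \<noteq> 0"
  shows "indicator {0..\<rho> x} t * emeasure (unif_level G \<rho> t) A
    = ennreal (\<rho> x) * (\<integral>\<^sup>+y. ennreal (kk x t * kk y t / (q1 x * q2 t)) * indicator A y \<partial>lebesgue)"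
proof (cases "0 < t \<and> t \<le> \<rho> x")
  case False
  then have "t < 0 \<or> \<rho> x < t" using t0 by auto
  then show ?thesis by (auto simp: kk_x[OF x] indicator_def)
next
  case True
  then have t: "0 < t" "t \<le> \<rho> x" by auto
  have rx: "0 < \<rho> x" using rho_pos[OF x] .
  define L where "L = level_set G \<rho> t"
  have L[measurable]: "L \<in> sets lebesgue" unfolding L_def using level_set_meas[OF t(1)] .
  have xL: "x \<in> level_set G \<rho> t" using x t by (simp add: level_set_def)
  have "\<And>y. kk x t * kk y t / (q1 x * q2 t) = indicator L y / (\<rho> x * lv t)"
    using t Z_pos xL by (simp add: kk_x[OF x] q1_G[OF x] q2_eq kk_def k0_ind L_def fracZ indicator_def)
  then have "(\<integral>\<^sup>+y. ennreal (kk x t * kk y t / (q1 x * q2 t)) * indicator A y \<partial>lebesgue)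
      = (\<integral>\<^sup>+y. ennreal (1 / (\<rho> x * lv t)) * indicator (L \<inter> A) y \<partial>lebesgue)"
    by (intro nn_integral_cong) (auto simp: indicator_def)
  also have "\<dots> = ennreal (1 / (\<rho> x * lv t)) * emeasure lebesgue (L \<inter> A)"
    using A L by (intro nn_integral_cmult_indicator) auto
  finally have F: "(\<integral>\<^sup>+y. ennreal (kk x t * kk y t / (q1 x * q2 t)) * indicator A y \<partial>lebesgue)
      = ennreal (1 / (\<rho> x * lv t)) * emeasure lebesgue (L \<inter> A)" .
  have U: "emeasure (unif_level G \<rho> t) A = emeasure lebesgue (L \<inter> A) / ennreal (lv t)"
    unfolding unif_level_def using emeasure_uniform_measure[OF L A] lv_eq[OF t(1)] by (simp add: L_def)
  show ?thesis
  proof (cases "lv t = 0")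
    case True
    have "emeasure lebesgue (L \<inter> A) \<le> emeasure lebesgue L" using A L by (intro emeasure_mono) auto
    then have "emeasure lebesgue (L \<inter> A) = 0" using lv_eq[OF t(1)] True by (simp add: L_def)
    then show ?thesis using F U by simp
  next
    case False
    then have lp: "0 < lv t" using lv_nn[of t] by simp
    have "ennreal (\<rho> x) * ennreal (1 / (\<rho> x * lv t)) = ennreal (1 / lv t)"
      using rx lp by (simp add: ennreal_mult[symmetric])
    then have "ennreal (\<rho> x) * (ennreal (1 / (\<rho> x * lv t)) * emeasure lebesgue (L \<inter> A))
        = ennreal (1 / lv t) * emeasure lebesgue (L \<inter> A)" by (simp add: mult.assoc[symmetric])
    moreover have "emeasure lebesgue (L \<inter> A) / ennreal (lv t) = ennreal (1 / lv t) * emeasure lebesgue (L \<inter> A)"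
      using lp by (simp add: divide_ennreal_def inverse_ennreal mult.commute divide_inverse)
    ultimately show ?thesis using F U t by (simp add: indicator_def)
  qed
qed

lemma slice_eq:
  assumes x: "x \<in> G"
  shows "slice_kernel G \<rho> x = T.K1 x"
proof -
  note [measurable] = G_meas
  have rx: "0 < \<rho> x" using rho_pos[OF x] .
  define W where "W y t = ennreal (kk x t * kk y t / (q1 x * q2 t))" for y t
  have Wm[measurable]: "(\<lambda>(y,t). W y t) \<in> borel_measurable (lebesgue \<Otimes>\<^sub>M lborel)"
    unfolding W_def by measurable
  have em: "ennreal (1 / \<rho> x) * (\<integral>\<^sup>+t. indicator {0..\<rho> x} t * emeasure (unif_level G \<rho> t) A \<partial>lborel)
      = emeasure (T.K1 x) A" if A: "A \<in> sets lebesgue" for A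
  proof -
    note [measurable] = A
    define F where "F t = (\<integral>\<^sup>+y. W y t * indicator A y \<partial>lebesgue)" for t
    have Fm[measurable]: "F \<in> borel_measurable lborel" unfolding F_def by measurable
    have xs[measurable]: "x \<in> space lebesgue" by simp
    have m: "(\<lambda>y. \<integral>\<^sup>+t. W y t \<partial>lborel) \<in> borel_measurable lebesgue" unfolding W_def by measurable
    have "emeasure (T.K1 x) A = (\<integral>\<^sup>+y. (\<integral>\<^sup>+t. W y t \<partial>lborel) * indicator A y \<partial>lebesgue)"
      unfolding T.K1_def using emeasure_density[OF m A] by (simp add: W_def)
    also have "\<dots> = (\<integral>\<^sup>+y. \<integral>\<^sup>+t. W y t * indicator A y \<partial>lborel \<partial>lebesgue)"
      by (rule nn_integral_cong) (simp add: nn_integral_multc)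
    also have "\<dots> = (\<integral>\<^sup>+t. F t \<partial>lborel)"
      unfolding F_def by (rule P.Fubini'[symmetric]) measurable
    finally have K: "emeasure (T.K1 x) A = (\<integral>\<^sup>+t. F t \<partial>lborel)" .
    have "(\<integral>\<^sup>+t. indicator {0..\<rho> x} t * emeasure (unif_level G \<rho> t) A \<partial>lborel) = (\<integral>\<^sup>+t. ennreal (\<rho> x) * F t \<partial>lborel)"
      using AE_lborel_singleton[of 0]
      by (intro nn_integral_cong_AE) (auto elim!: eventually_mono simp: F_def W_def slice_pt[OF x A])
    also have "\<dots> = ennreal (\<rho> x) * (\<integral>\<^sup>+t. F t \<partial>lborel)"
      by (rule nn_integral_cmult) measurable
    finally show ?thesis using K rx by (simp add: mult.assoc[symmetric] ennreal_mult[symmetric])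
  qed
  have "slice_kernel G \<rho> x = measure_of UNIV (sets lebesgue) (emeasure (T.K1 x))"
    unfolding slice_kernel_def
  proof (rule measure_of_eq)
    show "sets lebesgue \<subseteq> Pow UNIV" by simp
    fix a :: "'a set" assume "a \<in> sigma_sets UNIV (sets lebesgue)"
    then have "a \<in> sets lebesgue"
      by (metis sets.sigma_sets_eq space_borel space_completion space_lborel)
    then show "ennreal (1 / \<rho> x) * (\<integral>\<^sup>+t. indicator {0..\<rho> x} t * emeasure (unif_level G \<rho> t) a \<partial>lborel) = emeasure (T.K1 x) a"
      by (rule em)
  qed
  also have "\<dots> = T.K1 x"
    using measure_of_of_measure[of "T.K1 x"] by (simp add: T.K1_def)
  finally show ?thesis .
qed

sublocale S: twostage lborel "lebesgue :: 'a measure" "\<lambda>t x. kk x t" q2 q1 by (rule T.swap)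

lemma aux_pt:
  assumes t: "0 < t" and lp: "0 < lv t" and B: "B \<in> sets lborel"
  shows "indicator (level_set G \<rho> t) x * emeasure lborel (B \<inter> {0..\<rho> x}) / ennreal (\<rho> x)
    = ennreal (lv t) * (\<integral>\<^sup>+s. ennreal (kk x t * kk x s / (q2 t * q1 x)) * indicator B s \<partial>lborel)"
proof (cases "x \<in> level_set G \<rho> t")
  case False
  then have "kk x t = 0" using t by (simp add: kk_def k0_ind)
  then show ?thesis using False by simp
next
  case True
  then have x: "x \<in> G" and tx: "t \<le> \<rho> x" by (auto simp: level_set_def)
  have rx: "0 < \<rho> x" using rho_pos[OF x] .
  have "\<And>s. kk x t * kk x s / (q2 t * q1 x) = indicator {0<..\<rho> x} s / (lv t * \<rho> x)"
    using t tx Z_pos by (simp add: kk_x[OF x] q1_G[OF x] q2_eq fracZ indicator_def)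
  then have "(\<integral>\<^sup>+s. ennreal (kk x t * kk x s / (q2 t * q1 x)) * indicator B s \<partial>lborel)
      = (\<integral>\<^sup>+s. ennreal (1 / (lv t * \<rho> x)) * indicator ({0<..\<rho> x} \<inter> B) s \<partial>lborel)"
    by (intro nn_integral_cong) (auto simp: indicator_def)
  also have "\<dots> = ennreal (1 / (lv t * \<rho> x)) * emeasure lborel ({0<..\<rho> x} \<inter> B)"
    using B by (intro nn_integral_cmult_indicator) auto
  finally have H: "(\<integral>\<^sup>+s. ennreal (kk x t * kk x s / (q2 t * q1 x)) * indicator B s \<partial>lborel)
      = ennreal (1 / (lv t * \<rho> x)) * emeasure lborel ({0<..\<rho> x} \<inter> B)" .
  have E: "emeasure lborel (B \<inter> {0..\<rho> x}) = emeasure lborel ({0<..\<rho> x} \<inter> B)"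
    using B AE_lborel_singleton[of 0]
    by (intro emeasure_eq_AE) (auto elim!: eventually_mono)
  have "ennreal (lv t) * ennreal (1 / (lv t * \<rho> x)) = ennreal (1 / \<rho> x)"
    using rx lp by (simp add: ennreal_mult[symmetric])
  then have "ennreal (lv t) * (ennreal (1 / (lv t * \<rho> x)) * emeasure lborel ({0<..\<rho> x} \<inter> B))
      = ennreal (1 / \<rho> x) * emeasure lborel ({0<..\<rho> x} \<inter> B)" by (simp add: mult.assoc[symmetric])
  moreover have "emeasure lborel ({0<..\<rho> x} \<inter> B) / ennreal (\<rho> x) = ennreal (1 / \<rho> x) * emeasure lborel ({0<..\<rho> x} \<inter> B)"
    using rx by (simp add: divide_ennreal_def inverse_ennreal mult.commute divide_inverse)
  ultimately show ?thesis using H E True by simp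
qed

lemma auxk_eq:
  assumes t: "0 < t"
  shows "aux_kernel G \<rho> t = S.K1 t"
proof -
  note [measurable] = G_meas
  define W where "W x s = ennreal (kk x t * kk x s / (q2 t * q1 x))" for x s
  have Wm[measurable]: "(\<lambda>(x,s). W x s) \<in> borel_measurable (lebesgue \<Otimes>\<^sub>M lborel)"
    unfolding W_def by measurable
  have em: "ennreal (1 / level_vol G \<rho> t) * (\<integral>\<^sup>+x. indicator (level_set G \<rho> t) x * emeasure lborel (B \<inter> {0..\<rho> x}) / ennreal (\<rho> x) \<partial>lebesgue)
      = emeasure (S.K1 t) B" if B: "B \<in> sets lborel" for B
  proof -
    note [measurable] = B
    define H where "H x = (\<integral>\<^sup>+s. W x s * indicator B s \<partial>lborel)" for x
    have Hm[measurable]: "H \<in> borel_measurable lebesgue" unfolding H_def by measurable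
    have ts[measurable]: "t \<in> space lborel" by simp
    have m: "(\<lambda>s. \<integral>\<^sup>+x. W x s \<partial>lebesgue) \<in> borel_measurable lborel" unfolding W_def by measurable
    have "emeasure (S.K1 t) B = (\<integral>\<^sup>+s. (\<integral>\<^sup>+x. W x s \<partial>lebesgue) * indicator B s \<partial>lborel)"
      unfolding S.K1_def using emeasure_density[OF m B] by (simp add: W_def)
    also have "\<dots> = (\<integral>\<^sup>+s. \<integral>\<^sup>+x. W x s * indicator B s \<partial>lebesgue \<partial>lborel)"
      by (rule nn_integral_cong) (simp add: nn_integral_multc)
    also have "\<dots> = (\<integral>\<^sup>+x. H x \<partial>lebesgue)"
      unfolding H_def by (rule P.Fubini') measurable
    finally have K: "emeasure (S.K1 t) B = (\<integral>\<^sup>+x. H x \<partial>lebesgue)" .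
    show ?thesis
    proof (cases "lv t = 0")
      case True
      then have "\<And>x s. W x s = 0" by (simp add: W_def q2_eq)
      then have "emeasure (S.K1 t) B = 0" using K by (simp add: H_def)
      then show ?thesis using True by (simp add: lv_def)
    next
      case False
      then have lp: "0 < lv t" using lv_nn[of t] by simp
      have "(\<integral>\<^sup>+x. indicator (level_set G \<rho> t) x * emeasure lborel (B \<inter> {0..\<rho> x}) / ennreal (\<rho> x) \<partial>lebesgue)
          = (\<integral>\<^sup>+x. ennreal (lv t) * H x \<partial>lebesgue)"
        by (rule nn_integral_cong) (simp add: aux_pt[OF t lp B] H_def W_def)
      also have "\<dots> = ennreal (lv t) * (\<integral>\<^sup>+x. H x \<partial>lebesgue)"
        by (rule nn_integral_cmult) measurable
      finally show ?thesis using K lp by (simp add: lv_def[symmetric] mult.assoc[symmetric] ennreal_mult[symmetric])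
    qed
  qed
  have "aux_kernel G \<rho> t = measure_of UNIV (sets lborel) (emeasure (S.K1 t))"
    unfolding aux_kernel_def
  proof (rule measure_of_eq)
    show "sets lborel \<subseteq> Pow UNIV" by simp
    fix a :: "real set" assume "a \<in> sigma_sets UNIV (sets lborel)"
    then have "a \<in> sets lborel"
      by (metis sets.sigma_sets_eq space_borel space_lborel)
    then show "ennreal (1 / level_vol G \<rho> t) * (\<integral>\<^sup>+x. indicator (level_set G \<rho> t) x * emeasure lborel (a \<inter> {0..\<rho> x}) / ennreal (\<rho> x) \<partial>lebesgue) = emeasure (S.K1 t) a"
      by (rule em)
  qed
  also have "\<dots> = S.K1 t"
    using measure_of_of_measure[of "S.K1 t"] by (simp add: S.K1_def)
  finally show ?thesis .
qed

lemma opnorm_PI: "opnorm_minus_E (target G \<rho>) (kernel_op (slice_kernel G \<rho>)) = opnorm_minus_E T.PI (kernel_op T.K1)"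
proof -
  have "L2_normsq T.PI (\<lambda>x. kernel_op (slice_kernel G \<rho>) f x - (\<integral>y. f y \<partial>T.PI))
      = L2_normsq T.PI (\<lambda>x. kernel_op T.K1 f x - (\<integral>y. f y \<partial>T.PI))" for f
  proof -
    have "AE x in T.PI. x \<in> G"
      unfolding T.AE_PI_iff by (auto simp: q1_def indicator_def)
    then show ?thesis unfolding L2_normsq_def
      by (intro nn_integral_cong_AE) (auto elim!: eventually_mono simp: kernel_op_def slice_eq)
  qed
  then show ?thesis unfolding target_eq opnorm_minus_E_def by simp
qed

lemma opnorm_MU: "opnorm_minus_E (aux_measure G \<rho>) (kernel_op (aux_kernel G \<rho>)) = opnorm_minus_E T.MU (kernel_op S.K1)"
proof -
  have "L2_normsq T.MU (\<lambda>x. kernel_op (aux_kernel G \<rho>) f x - (\<integral>y. f y \<partial>T.MU))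
      = L2_normsq T.MU (\<lambda>x. kernel_op S.K1 f x - (\<integral>y. f y \<partial>T.MU))" for f
  proof -
    have "AE t in S.PI. 0 < t"
      unfolding S.AE_PI_iff by (auto simp: q2_eq indicator_def)
    then have "AE t in T.MU. 0 < t" unfolding T.PI_S .
    then show ?thesis unfolding L2_normsq_def
      by (intro nn_integral_cong_AE) (auto elim!: eventually_mono simp: kernel_op_def auxk_eq)
  qed
  then show ?thesis unfolding aux_eq opnorm_minus_E_def by simp
qed

lemma final:
  "spectral_gap (target G \<rho>) (kernel_op (slice_kernel G \<rho>))
     = spectral_gap (aux_measure G \<rho>) (kernel_op (aux_kernel G \<rho>))"
proof -
  have 1: "opnorm_minus_E T.PI (kernel_op T.K1) = (let S = T.SU in if S = top then top else ennreal (sqrt (enn2real S)))"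
    by (simp add: opnorm_minus_E_def T.SU_def T.ballPI_def)
  have 2: "opnorm_minus_E T.MU (kernel_op S.K1) = (let S = S.SU in if S = top then top else ennreal (sqrt (enn2real S)))"
    by (simp add: opnorm_minus_E_def S.SU_def S.ballPI_def T.PI_S)
  show ?thesis unfolding spectral_gap_def opnorm_PI opnorm_MU 1 2 T.SU_sym[symmetric] ..
qed

end

theorem mainTheorem4:
  fixes G :: "'a::euclidean_space set" and \<rho> :: "'a \<Rightarrow> real"
  assumes "G \<in> sets lebesgue"
    and "emeasure lebesgue G > 0"
    and "\<And>x. x \<in> G \<Longrightarrow> \<rho> x > 0"
    and "set_integrable lebesgue G \<rho>"
  shows "spectral_gap (target G \<rho>) (kernel_op (slice_kernel G \<rho>))
       = spectral_gap (aux_measure G \<rho>) (kernel_op (aux_kernel G \<rho>))"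
proof -
  interpret inst G \<rho> using assms by unfold_locales
  show ?thesis by (rule final)
qed


end
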